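(* Let $\kappa\in(0,\infty)$, $d\in\mathbb{N}$, and let $\mathfrak{l}\colon\mathbb{R}^d\times\mathbb{R}^d\to\mathbb{R}$ satisfy $\mathfrak{l}(\theta,x)=\frac{\kappa}{2}\|\theta-x\|^2$ for all $\theta,x\in\mathbb{R}^d$. Let $(\Omega,\mathcal{F},(\mathbb{F}_n)_{n\in\mathbb{N}_0},\mathbb{P})$ be a filtered probability space. For every $n\in\mathbb{N}$ let $\gamma_n\colon\Omega\to\mathbb{R}$ be $\mathbb{F}_{n-1}$-measurable, assume $\mathbb{P}(\limsup_{n\to\infty}\gamma_n=0)=\mathbb{P}(\sum_{n=1}^\infty|\gamma_n|=\infty)=1$, and assume $\mathbb{P}(\gamma_{n+1}\le\gamma_n\le\kappa^{-1})=1$ for all $n\in\mathbb{N}$. Let $M\in\mathbb{N}$, let $X_{n,m}\colon\Omega\to\mathbb{R}^d$, $(n,m)\in\mathbb{N}\times\{1,\dots,M\}$, be i.i.d. random variables, and let $\Theta\colon\mathbb{N}_0\times\Omega\to\mathbb{R}^d$ be an $(\mathbb{F}_n)_{n\in\mathbb{N}_0}$-adapted process such that for all $n\in\mathbb{N}$ $$\Theta_n=\Theta_{n-1}-\frac{\gamma_n}{M}\Big[\sum_{m=1}^M(\nabla_\theta\mathfrak{l})(\Theta_{n-1},X_{n,m})\Big].$$ Assume that $X_{n,m}$ is $\mathbb{F}_n$-measurable for all $n\in\mathbb{N}$, $m\in\{1,\dots,M\}$, that $\sigma((X_{n,m})_{m\in\{1,\dots,M\}})$ and $\mathbb{F}_{n-1}$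 are independent for all $n\in\mathbb{N}$, and that $\mathbb{E}\big[\|\Theta_0\|^2+\sup_{n\in\mathbb{N}}\|X_{n,1}\|\big]<\infty$. For every $t\in[0,\infty)$ let $N_t=\inf\{n\in\mathbb{N}_0\colon\sum_{k=1}^n\gamma_k\ge t\}$. Then $$\limsup_{t\to\infty}\mathbb{E}\big[\|\Theta_{N_t}-\mathbb{E}[X_{1,1}]\|^2\big]=0.$$
   Context: $\|\cdot\|$ is the Euclidean norm; $\nabla_\theta\mathfrak{l}$ is the gradient in the first argument. *)

theory Defs
  imports "HOL-Probability.Probability"
begin

definition grad1 :: "('v::real_inner \<Rightarrow> 'x \<Rightarrow> real) \<Rightarrow> 'v \<Rightarrow> 'x \<Rightarrow> 'v" where
  "grad1 l \<theta> x = (THE D. GDERIV (\<lambda>y. l y x) \<theta> :> D)"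

end

theory Submission
  imports Defs
begin


lemma grad1_sq:
  fixes \<kappa> :: real and l :: "real^'d \<Rightarrow> real^'d \<Rightarrow> real"
  assumes l_def: "\<And>\<theta> x. l \<theta> x = \<kappa> / 2 * (norm (\<theta> - x))^2"
  shows "grad1 l \<theta> x = \<kappa> *\<^sub>R (\<theta> - x)"
proof -
  have ld: "(\<lambda>y. l y x) = (\<lambda>y. \<kappa> / 2 * ((y - x) \<bullet> (y - x)))"
    by (auto simp: l_def power2_norm_eq_inner)
  have d1: "((\<lambda>y. y - x) has_derivative (\<lambda>h. h)) (at \<theta>)"
    using has_derivative_diff[OF has_derivative_ident has_derivative_const[of x]] by simp
  have d2: "((\<lambda>y. (y - x) \<bullet> (y - x)) has_derivative (\<lambda>h. (\<theta> - x) \<bullet> h + h \<bullet> (\<theta> - x))) (at \<theta>)"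
    by (rule has_derivative_inner[OF d1 d1])
  have d3: "((\<lambda>y. \<kappa> / 2 * ((y - x) \<bullet> (y - x))) has_derivative
      (\<lambda>h. \<kappa> / 2 * ((\<theta> - x) \<bullet> h + h \<bullet> (\<theta> - x)) + 0 * ((\<theta> - x) \<bullet> (\<theta> - x)))) (at \<theta>)"
    by (rule has_derivative_mult[OF has_derivative_const d2])
  have eq: "(\<lambda>h. \<kappa> / 2 * ((\<theta> - x) \<bullet> h + h \<bullet> (\<theta> - x)) + 0 * ((\<theta> - x) \<bullet> (\<theta> - x))) = (\<lambda>h. h \<bullet> (\<kappa> *\<^sub>R (\<theta> - x)))"
  proof
    fix h
    have "(\<theta> - x) \<bullet> h = h \<bullet> (\<theta> - x)" by (rule inner_commute)
    then show "\<kappa> / 2 * ((\<theta> - x) \<bullet> h + h \<bullet> (\<theta> - x)) + 0 * ((\<theta> - x) \<bullet> (\<theta> - x)) = h \<bullet> (\<kappa> *\<^sub>R (\<theta> - x))"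
      by simp
  qed
  have D: "GDERIV (\<lambda>y. l y x) \<theta> :> \<kappa> *\<^sub>R (\<theta> - x)"
    unfolding ld gderiv_def using d3 eq by simp
  have U: "D' = \<kappa> *\<^sub>R (\<theta> - x)" if "GDERIV (\<lambda>y. l y x) \<theta> :> D'" for D'
  proof -
    have "(\<lambda>h. h \<bullet> D') = (\<lambda>h. h \<bullet> (\<kappa> *\<^sub>R (\<theta> - x)))"
      using has_derivative_unique that D unfolding gderiv_def by blast
    then have "(D' - \<kappa> *\<^sub>R (\<theta> - x)) \<bullet> D' = (D' - \<kappa> *\<^sub>R (\<theta> - x)) \<bullet> (\<kappa> *\<^sub>R (\<theta> - x))"
      by metis
    then have "(D' - \<kappa> *\<^sub>R (\<theta> - x)) \<bullet> (D' - \<kappa> *\<^sub>R (\<theta> - x)) = 0"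
      by (simp add: inner_diff_right)
    then show ?thesis by simp
  qed
  show ?thesis unfolding grad1_def
    by (rule the_equality[where P="\<lambda>D. GDERIV (\<lambda>y. l y x) \<theta> :> D", OF D U])
qed


lemma (in prob_space) X_bounded:
  fixes X :: "nat \<Rightarrow> nat \<Rightarrow> 'a \<Rightarrow> real^'d"
  assumes Mb: "Mb \<ge> 1"
    and X_rv: "\<And>n m. n \<ge> 1 \<Longrightarrow> m \<in> {1..Mb} \<Longrightarrow> X n m \<in> borel_measurable M"
    and X_indep: "indep_vars (\<lambda>_. borel) (\<lambda>(n, m). X n m) {(n, m). n \<ge> 1 \<and> m \<in> {1..Mb}}"
    and X_ident: "\<And>n m. n \<ge> 1 \<Longrightarrow> m \<in> {1..Mb} \<Longrightarrow>
        distr M borel (X n m) = distr M borel (X 1 1)"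
    and mom: "(\<integral>\<^sup>+\<omega>. (SUP n\<in>{1..}. ennreal (norm (X n 1 \<omega>))) \<partial>M) < \<infinity>"
  shows "\<exists>B. AE \<omega> in M. \<forall>n m. n \<ge> 1 \<longrightarrow> m \<in> {1..Mb} \<longrightarrow> norm (X n m \<omega>) \<le> B"
proof -
  define C where "C = (\<integral>\<^sup>+\<omega>. (SUP n\<in>{1..}. ennreal (norm (X n 1 \<omega>))) \<partial>M)"
  define c where "c = enn2real C + 1"
  define Sc where "Sc = {x::real^'d. norm x \<le> c}"
  have Sc: "Sc \<in> sets borel" unfolding Sc_def by measurable
  define p where "p = prob (X 1 1 -` Sc \<inter> space M)"
  have m11: "1 \<in> {1..Mb}" using Mb by auto
  have pj: "prob (X j m -` Sc \<inter> space M) = p" if "j \<ge> 1" "m \<in> {1..Mb}" for j m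
  proof -
    have "prob (X j m -` Sc \<inter> space M) = measure (distr M borel (X j m)) Sc"
      using measure_distr[OF X_rv[OF that] Sc] by simp
    also have "\<dots> = measure (distr M borel (X 1 1)) Sc" using X_ident[OF that] by simp
    also have "\<dots> = p" unfolding p_def using measure_distr[OF X_rv[OF _ m11] Sc] by simp
    finally show ?thesis .
  qed
  have ev: "X j m -` Sc \<inter> space M \<in> events" if "j \<ge> 1" "m \<in> {1..Mb}" for j m
    using measurable_sets[OF X_rv[OF that] Sc] .
  have p1: "p = 1"
  proof (rule ccontr)
    assume "p \<noteq> 1"
    moreover have "p \<le> 1" "0 \<le> p" unfolding p_def by auto
    ultimately have p: "p < 1" "0 \<le> p" by auto
    have key: "c * (1 - p^K) \<le> enn2real C" for K
    proof (cases "K = 0")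
      case True then show ?thesis by (simp add: enn2real_nonneg)
    next
      case False
      define J where "J = (\<lambda>j. (j, 1::nat)) ` {1..K}"
      define I where "I = (\<Inter>j\<in>{1..K}. X j 1 -` Sc \<inter> space M)"
      have "prob (\<Inter>i\<in>J. (\<lambda>(n, m). X n m) i -` Sc \<inter> space M)
          = (\<Prod>i\<in>J. prob ((\<lambda>(n, m). X n m) i -` Sc \<inter> space M))"
        apply (rule indep_setsD[OF X_indep[unfolded indep_vars_def2, THEN conjunct2]])
        using False m11 Sc by (auto simp: J_def)
      also have "\<dots> = (\<Prod>j\<in>{1..K}. prob (X j 1 -` Sc \<inter> space M))"
        unfolding J_def by (subst prod.reindex) (auto simp: inj_on_def)
      also have "\<dots> = p^K" using pj m11 by simp
      finally have PJ: "prob (\<Inter>i\<in>J. (\<lambda>(n, m). X n m) i -` Sc \<inter> space M) = p^K" .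
      have EQ: "(\<Inter>i\<in>J. (\<lambda>(n, m). X n m) i -` Sc \<inter> space M) = I"
        unfolding I_def J_def by auto
      have PI: "prob I = p^K" using PJ EQ by simp
      have Iev: "I \<in> events" unfolding I_def using ev m11 False by (intro sets.finite_INT) auto
      define U where "U = space M - I"
      have PU: "prob U = 1 - p^K" unfolding U_def using prob_compl[OF Iev] PI by simp
      have "(\<integral>\<^sup>+\<omega>. ennreal c * indicator U \<omega> \<partial>M) \<le> C"
        unfolding C_def
      proof (rule nn_integral_mono)
        fix \<omega> assume \<omega>: "\<omega> \<in> space M"
        show "ennreal c * indicator U \<omega> \<le> (SUP n\<in>{1..}. ennreal (norm (X n 1 \<omega>)))"
        proof (cases "\<omega> \<in> U")
          case True
          then obtain j where j: "j \<in> {1..K}" "c < norm (X j 1 \<omega>)"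
            using \<omega> False unfolding U_def I_def Sc_def by (auto simp: not_le)
          have "ennreal c \<le> ennreal (norm (X j 1 \<omega>))" using j by (auto intro: ennreal_leI)
          also have "\<dots> \<le> (SUP n\<in>{1..}. ennreal (norm (X n 1 \<omega>)))"
            using j by (intro SUP_upper) auto
          finally show ?thesis using True by simp
        qed simp
      qed
      moreover have "(\<integral>\<^sup>+\<omega>. ennreal c * indicator U \<omega> \<partial>M) = ennreal c * emeasure M U"
        using Iev unfolding U_def by (intro nn_integral_cmult_indicator) auto
      moreover have "emeasure M U = ennreal (1 - p^K)"
        using PU Iev unfolding U_def by (simp add: emeasure_eq_measure)
      moreover have "C = ennreal (enn2real C)" using mom unfolding C_def by simp
      ultimately have "ennreal c * ennreal (1 - p^K) \<le> ennreal (enn2real C)" by simp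
      moreover have "0 \<le> c" unfolding c_def by (simp add: enn2real_nonneg add_nonneg_nonneg)
      moreover have "p^K \<le> 1" using p by (simp add: power_le_one)
      ultimately show ?thesis using enn2real_nonneg[of C] by (simp add: ennreal_mult'[symmetric] ennreal_le_iff2) linarith
    qed
    have "(\<lambda>K. c * (1 - p^K)) \<longlonglongrightarrow> c * (1 - 0)"
      using p by (intro tendsto_intros LIMSEQ_power_zero) auto
    then have "c \<le> enn2real C"
      using key by (intro LIMSEQ_le_const2[where X="\<lambda>K. c * (1 - p^K)"]) auto
    then show False unfolding c_def by simp
  qed
  have "AE \<omega> in M. norm (X n m \<omega>) \<le> c" if "n \<ge> 1" "m \<in> {1..Mb}" for n m
  proof -
    have "AE \<omega> in M. \<omega> \<in> X n m -` Sc \<inter> space M"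
      using pj[OF that] p1 by (intro AE_prob_1) simp
    then show ?thesis unfolding Sc_def by auto
  qed
  then have "AE \<omega> in M. \<forall>n m. n \<ge> 1 \<longrightarrow> m \<in> {1..Mb} \<longrightarrow> norm (X n m \<omega>) \<le> c"
    by (subst AE_all_countable, intro allI, subst AE_all_countable) auto
  then show ?thesis by blast
qed


lemma (in prob_space) indep_mult_integral:
  fixes U :: "'a \<Rightarrow> real" and W :: "'a \<Rightarrow> real"
  assumes ind: "indep_set (sigma_sets (space M) Z) (sets G)"
    and G: "subalgebra M G"
    and U: "U \<in> borel_measurable G" "integrable M U"
    and W: "W \<in> borel_measurable M" "integrable M W"
    and Wgen: "\<And>A. A \<in> sets borel \<Longrightarrow> W -` A \<inter> space M \<in> sigma_sets (space M) Z"
  shows "integral\<^sup>L M (\<lambda>\<omega>. U \<omega> * W \<omega>) = integral\<^sup>L M U * integral\<^sup>L M W"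
    and "integrable M (\<lambda>\<omega>. U \<omega> * W \<omega>)"
proof -
  have spG: "space G = space M" using G by (simp add: subalgebra_def)
  have sub1: "sigma_sets (space M) {W -` A \<inter> space M |A. A \<in> sets borel} \<subseteq> sigma_sets (space M) Z"
    by (rule sigma_sets_mono) (use Wgen in auto)
  have sub2: "sigma_sets (space M) {U -` A \<inter> space M |A. A \<in> sets borel} \<subseteq> sets G"
  proof -
    have "{U -` A \<inter> space M |A. A \<in> sets borel} \<subseteq> sets G"
      using U(1) spG by (auto simp: measurable_def)
    from sets.sigma_sets_subset[OF this] show ?thesis using spG by simp
  qed
  have iv: "indep_var borel W borel U"
    unfolding indep_var_eq
  proof (intro conjI)
    show "random_variable borel W" using W(1) by simp
    show "random_variable borel U" using measurable_from_subalg[OF G U(1)] .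
    show "indep_set (sigma_sets (space M) {W -` A \<inter> space M |A. A \<in> sets borel})
        (sigma_sets (space M) {U -` A \<inter> space M |A. A \<in> sets borel})"
      using ind unfolding indep_set_def
      by (rule indep_sets_mono_sets) (use sub1 sub2 in \<open>auto split: bool.split\<close>)
  qed
  have "integral\<^sup>L M (\<lambda>\<omega>. W \<omega> * U \<omega>) = integral\<^sup>L M W * integral\<^sup>L M U"
    by (rule indep_var_lebesgue_integral[OF iv W(2) U(2)])
  then show "integral\<^sup>L M (\<lambda>\<omega>. U \<omega> * W \<omega>) = integral\<^sup>L M U * integral\<^sup>L M W"
    by (simp add: mult.commute)
  have "integrable M (\<lambda>\<omega>. W \<omega> * U \<omega>)"
    by (rule indep_var_integrable[OF iv W(2) U(2)])
  then show "integrable M (\<lambda>\<omega>. U \<omega> * W \<omega>)" by (simp add: mult.commute)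
qed


locale sgd_setup = prob_space M
  for M :: "'w measure" +
  fixes \<kappa> :: real and F :: "nat \<Rightarrow> 'w measure" and \<gamma> :: "nat \<Rightarrow> 'w \<Rightarrow> real"
    and Mb :: nat and X :: "nat \<Rightarrow> nat \<Rightarrow> 'w \<Rightarrow> real^'d" and \<Theta> :: "nat \<Rightarrow> 'w \<Rightarrow> real^'d"
    and \<mu> :: "real^'d" and D :: real
  assumes kpos: "0 < \<kappa>"
    and sub: "\<And>n. subalgebra M (F n)"
    and Fmono: "\<And>i j. i \<le> j \<Longrightarrow> sets (F i) \<subseteq> sets (F j)"
    and gmeas: "\<And>n. \<gamma> (Suc n) \<in> borel_measurable (F n)"
    and Mb: "Mb \<ge> 1"
    and Xmeas: "\<And>n m. m \<in> {1..Mb} \<Longrightarrow> X (Suc n) m \<in> borel_measurable M"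
    and Xint: "\<And>n m. m \<in> {1..Mb} \<Longrightarrow> integrable M (X (Suc n) m)"
    and Xmean: "\<And>n m. m \<in> {1..Mb} \<Longrightarrow> integral\<^sup>L M (X (Suc n) m) = \<mu>"
    and Xind: "\<And>n. indep_set (sigma_sets (space M) (\<Union>m\<in>{1..Mb}. {X (Suc n) m -` A \<inter> space M | A. A \<in> sets borel})) (sets (F n))"
    and ThF: "\<And>n. \<Theta> n \<in> borel_measurable (F n)"
    and rec: "\<And>n \<omega>. \<omega> \<in> space M \<Longrightarrow> \<Theta> (Suc n) \<omega> - \<mu> = (1 - \<kappa> * \<gamma> (Suc n) \<omega>) *\<^sub>R (\<Theta> n \<omega> - \<mu>)
        + (\<kappa> * \<gamma> (Suc n) \<omega>) *\<^sub>R ((1 / real Mb) *\<^sub>R (\<Sum>m=1..Mb. X (Suc n) m \<omega>) - \<mu>)"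
    and good: "AE \<omega> in M. \<forall>n. 0 \<le> \<gamma> (Suc n) \<omega> \<and> \<kappa> * \<gamma> (Suc n) \<omega> \<le> 1 \<and>
        norm ((1 / real Mb) *\<^sub>R (\<Sum>m=1..Mb. X (Suc n) m \<omega>) - \<mu>) \<le> D"
    and Dnn: "0 \<le> D"
    and V0: "integrable M (\<lambda>\<omega>. (norm (\<Theta> 0 \<omega> - \<mu>))^2)"
begin

definition "xi n \<omega> = (1 / real Mb) *\<^sub>R (\<Sum>m=1..Mb. X n m \<omega>) - \<mu>"
definition "e n \<omega> = \<Theta> n \<omega> - \<mu>"
definition "S n \<omega> = (\<Sum>k=1..n. \<gamma> k \<omega>)"
definition "A n \<omega> = exp (\<kappa> * S n \<omega>)"
definition "V n \<omega> = (norm (e n \<omega>))^2"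
definition "goodw \<omega> \<longleftrightarrow> (\<forall>n. 0 \<le> \<gamma> (Suc n) \<omega> \<and> \<kappa> * \<gamma> (Suc n) \<omega> \<le> 1 \<and> norm (xi (Suc n) \<omega>) \<le> D)"

lemma AE_good: "AE \<omega> in M. goodw \<omega>"
  using good unfolding goodw_def xi_def .

lemma spF: "space (F n) = space M"
  using sub[of n] by (simp add: subalgebra_def)

lemma measF_mono: "f \<in> borel_measurable (F i) \<Longrightarrow> i \<le> j \<Longrightarrow> f \<in> borel_measurable (F j)"
  by (rule measurable_from_subalg[of "F j" "F i"]) (auto simp: subalgebra_def spF Fmono)

lemma measM: "f \<in> borel_measurable (F i) \<Longrightarrow> f \<in> borel_measurable M"
  by (rule measurable_from_subalg[OF sub])

lemma e_F: "e n \<in> borel_measurable (F n)"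
proof -
  have [measurable]: "\<Theta> n \<in> borel_measurable (F n)" by (rule ThF)
  show ?thesis unfolding e_def by measurable
qed

lemma e_M: "e n \<in> borel_measurable M" using measM[OF e_F] .

lemma V_M: "V n \<in> borel_measurable M"
proof -
  have [measurable]: "e n \<in> borel_measurable M" by (rule e_M)
  show ?thesis unfolding V_def by measurable
qed

lemma S_F: "j \<le> Suc n \<Longrightarrow> S j \<in> borel_measurable (F n)"
  unfolding S_def
proof (intro borel_measurable_sum)
  fix k assume "j \<le> Suc n" "k \<in> {1..j}"
  then obtain k' where k': "k = Suc k'" "k' \<le> n" by (cases k) auto
  show "\<gamma> k \<in> borel_measurable (F n)" using measF_mono[OF gmeas[of k'] k'(2)] k' by simp
qed

lemma A_F: "j \<le> Suc n \<Longrightarrow> A j \<in> borel_measurable (F n)"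
proof -
  assume "j \<le> Suc n"
  then have [measurable]: "S j \<in> borel_measurable (F n)" by (rule S_F)
  show ?thesis unfolding A_def by measurable
qed

lemma A_M: "A j \<in> borel_measurable M"
  using measM[OF A_F[of j j]] by simp

lemma g_M: "\<gamma> (Suc n) \<in> borel_measurable M" using measM[OF gmeas] .

lemma xi_M: "xi (Suc n) \<in> borel_measurable M"
proof -
  have [measurable]: "m \<in> {1..Mb} \<Longrightarrow> X (Suc n) m \<in> borel_measurable M" for m by (rule Xmeas)
  show ?thesis unfolding xi_def by measurable
qed

lemma S_Suc: "S (Suc n) \<omega> = S n \<omega> + \<gamma> (Suc n) \<omega>"
  unfolding S_def by simp

lemma S_0: "S 0 \<omega> = 0" unfolding S_def by simp

lemma A_Suc: "A (Suc n) \<omega> = A n \<omega> * exp (\<kappa> * \<gamma> (Suc n) \<omega>)"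
  unfolding A_def S_Suc by (simp add: distrib_left exp_add)

lemma A_pos: "0 < A n \<omega>" unfolding A_def by simp

lemma e_rec: "\<omega> \<in> space M \<Longrightarrow> e (Suc n) \<omega> = (1 - \<kappa> * \<gamma> (Suc n) \<omega>) *\<^sub>R e n \<omega> + (\<kappa> * \<gamma> (Suc n) \<omega>) *\<^sub>R xi (Suc n) \<omega>"
  unfolding e_def xi_def using rec by simp

lemma e_bound: "\<omega> \<in> space M \<Longrightarrow> goodw \<omega> \<Longrightarrow> norm (e n \<omega>) \<le> norm (e 0 \<omega>) + n * D"
proof (induction n)
  case 0 then show ?case by simp
next
  case (Suc n)
  define a where "a = \<kappa> * \<gamma> (Suc n) \<omega>"
  have a: "0 \<le> a" "a \<le> 1" using Suc.prems kpos unfolding goodw_def a_def by auto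
  have xb: "norm (xi (Suc n) \<omega>) \<le> D" using Suc.prems unfolding goodw_def by auto
  have "norm (e (Suc n) \<omega>) \<le> norm ((1 - a) *\<^sub>R e n \<omega>) + norm (a *\<^sub>R xi (Suc n) \<omega>)"
    unfolding e_rec[OF Suc.prems(1)] a_def by (rule norm_triangle_ineq)
  also have "\<dots> = (1 - a) * norm (e n \<omega>) + a * norm (xi (Suc n) \<omega>)" using a by simp
  also have "\<dots> \<le> norm (e n \<omega>) + D"
    using a xb by (smt (verit) mult_left_le_one_le mult_nonneg_nonneg norm_ge_zero)
  finally show ?case using Suc by (simp add: algebra_simps)
qed

lemma S_bound: "goodw \<omega> \<Longrightarrow> 0 \<le> S n \<omega> \<and> \<kappa> * S n \<omega> \<le> n"
proof (induction n)
  case 0 then show ?case by (simp add: S_0)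
next
  case (Suc n)
  then have "0 \<le> \<gamma> (Suc n) \<omega>" "\<kappa> * \<gamma> (Suc n) \<omega> \<le> 1" "0 \<le> S n \<omega>" "\<kappa> * S n \<omega> \<le> n"
    unfolding goodw_def by auto
  then show ?case unfolding S_Suc by (simp add: distrib_left)
qed

lemma A_bound: "goodw \<omega> \<Longrightarrow> A n \<omega> \<le> exp n"
  unfolding A_def using S_bound by simp

end


lemma norm_comb_sq:
  fixes x y :: "'a::real_inner"
  shows "(norm (p *\<^sub>R x + q *\<^sub>R y))^2 = p^2 * (norm x)^2 + 2*p*q*(x \<bullet> y) + q^2 * (norm y)^2"
  unfolding power2_norm_eq_inner by (simp add: inner_add_left inner_add_right inner_commute algebra_simps power2_eq_square)

lemma le_1_plus_sq: "(x::real) \<le> 1 + x^2"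
proof -
  have "0 \<le> (x - 1/2)^2" by simp
  then show ?thesis by (simp add: power2_diff power2_eq_square field_simps)
qed

lemma sq_sum_le: "((a::real) + b)^2 \<le> 2 * a^2 + 2 * b^2"
proof -
  have "0 \<le> (a - b)^2" by simp
  then show ?thesis by (simp add: power2_diff power2_sum)
qed

lemma exp_contr: "0 \<le> (a::real) \<Longrightarrow> a \<le> 1 \<Longrightarrow> exp a * (1 - a)^2 \<le> 1"
proof -
  assume a: "0 \<le> a" "a \<le> 1"
  have "1 - a \<le> exp (-a)" using exp_ge_add_one_self[of "-a"] by simp
  moreover have "(1 - a)^2 \<le> 1 - a" using a by (simp add: power2_eq_square mult_left_le_one_le)
  ultimately have "(1 - a)^2 \<le> exp (-a)" by linarith
  then have "exp a * (1 - a)^2 \<le> exp a * exp (-a)" by (simp add: mult_left_mono)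
  also have "\<dots> = 1" by (simp add: exp_minus)
  finally show ?thesis .
qed

context sgd_setup begin

lemma intV0: "integrable M (V 0)"
  using V0 unfolding V_def e_def by simp

lemma intE0: "integrable M (\<lambda>\<omega>. norm (e 0 \<omega>))"
proof (rule Bochner_Integration.integrable_bound[where f="\<lambda>\<omega>. 1 + V 0 \<omega>"])
  show "integrable M (\<lambda>\<omega>. 1 + V 0 \<omega>)" using intV0 by simp
  show "(\<lambda>\<omega>. norm (e 0 \<omega>)) \<in> borel_measurable M" using e_M by measurable
  show "AE \<omega> in M. norm (norm (e 0 \<omega>)) \<le> norm (1 + V 0 \<omega>)"
  proof (intro AE_I2)
    fix \<omega>
    have "norm (e 0 \<omega>) \<le> 1 + (norm (e 0 \<omega>))^2"
      by (rule le_1_plus_sq)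
    then show "norm (norm (e 0 \<omega>)) \<le> norm (1 + V 0 \<omega>)" unfolding V_def by simp
  qed
qed

lemma intEn: "integrable M (\<lambda>\<omega>. norm (e n \<omega>))"
proof (rule Bochner_Integration.integrable_bound[where f="\<lambda>\<omega>. norm (e 0 \<omega>) + real n * D"])
  show "integrable M (\<lambda>\<omega>. norm (e 0 \<omega>) + real n * D)" using intE0 by simp
  show "(\<lambda>\<omega>. norm (e n \<omega>)) \<in> borel_measurable M" using e_M by measurable
  show "AE \<omega> in M. norm (norm (e n \<omega>)) \<le> norm (norm (e 0 \<omega>) + real n * D)"
    using AE_good AE_space
  proof eventually_elim
    case (elim \<omega>)
    then show ?case using e_bound[of \<omega> n] Dnn by simp
  qed
qed

lemma intVn: "integrable M (V n)"
proof (rule Bochner_Integration.integrable_bound[where f="\<lambda>\<omega>. 2 * V 0 \<omega> + 2 * (real n * D)^2"])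
  show "integrable M (\<lambda>\<omega>. 2 * V 0 \<omega> + 2 * (real n * D)^2)" using intV0 by simp
  show "V n \<in> borel_measurable M" by (rule V_M)
  show "AE \<omega> in M. norm (V n \<omega>) \<le> norm (2 * V 0 \<omega> + 2 * (real n * D)^2)"
    using AE_good AE_space
  proof eventually_elim
    case (elim \<omega>)
    have b: "norm (e n \<omega>) \<le> norm (e 0 \<omega>) + real n * D" using e_bound elim by simp
    have "V n \<omega> \<le> (norm (e 0 \<omega>) + real n * D)^2" unfolding V_def
      using b by (intro power_mono) auto
    also have "\<dots> \<le> 2 * V 0 \<omega> + 2 * (real n * D)^2" unfolding V_def
      by (rule sq_sum_le)
    finally show ?case unfolding V_def by simp
  qed
qed

lemma cross_zero_comp:
  assumes U: "U \<in> borel_measurable (F n)" "integrable M U" and m: "m \<in> {1..Mb}"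
  shows "integral\<^sup>L M (\<lambda>\<omega>. U \<omega> * X (Suc n) m \<omega> $ i) = integral\<^sup>L M U * \<mu> $ i"
    and "integrable M (\<lambda>\<omega>. U \<omega> * X (Suc n) m \<omega> $ i)"
proof -
  have [measurable]: "X (Suc n) m \<in> borel_measurable M" by (rule Xmeas[OF m])
  have W: "(\<lambda>\<omega>. X (Suc n) m \<omega> $ i) \<in> borel_measurable M"
    by (rule measurable_compose[OF Xmeas[OF m]]) (intro borel_measurable_continuous_onI linear_continuous_on bounded_linear_vec_nth)
  have Wi: "integrable M (\<lambda>\<omega>. X (Suc n) m \<omega> $ i)"
    using integrable_bounded_linear[OF bounded_linear_vec_nth Xint[OF m]] .
  have Wm: "integral\<^sup>L M (\<lambda>\<omega>. X (Suc n) m \<omega> $ i) = \<mu> $ i"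
    using integral_bounded_linear[OF bounded_linear_vec_nth Xint[OF m]] Xmean[OF m] by simp
  have Wgen: "(\<lambda>\<omega>. X (Suc n) m \<omega> $ i) -` B \<inter> space M \<in>
      sigma_sets (space M) (\<Union>m\<in>{1..Mb}. {X (Suc n) m -` A \<inter> space M | A. A \<in> sets borel})"
    if B: "B \<in> sets borel" for B
  proof -
    have "(\<lambda>x::real^'d. x $ i) -` B \<in> sets borel"
      using measurable_sets[OF borel_measurable_continuous_onI[OF linear_continuous_on[OF bounded_linear_vec_nth]] B, of i]
      by simp
    moreover have "(\<lambda>\<omega>. X (Suc n) m \<omega> $ i) -` B \<inter> space M = X (Suc n) m -` ((\<lambda>x. x $ i) -` B) \<inter> space M"
      by auto
    ultimately show ?thesis using m by (intro sigma_sets.Basic) blast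
  qed
  note L = indep_mult_integral[OF Xind[of n] sub[of n] U W Wi Wgen]
  show "integral\<^sup>L M (\<lambda>\<omega>. U \<omega> * X (Suc n) m \<omega> $ i) = integral\<^sup>L M U * \<mu> $ i"
    using L(1) Wm by simp
  show "integrable M (\<lambda>\<omega>. U \<omega> * X (Suc n) m \<omega> $ i)" using L(2) .
qed

end

context sgd_setup begin

lemma one_step:
  assumes H: "H \<in> borel_measurable (F n)" "\<And>\<omega>. 0 \<le> H \<omega>" "\<And>\<omega>. H \<omega> \<le> 1"
  shows "(\<integral>\<^sup>+\<omega>. ennreal (H \<omega> * A (Suc n) \<omega> * V (Suc n) \<omega>) \<partial>M)
     \<le> (\<integral>\<^sup>+\<omega>. ennreal (H \<omega> * A n \<omega> * V n \<omega>) \<partial>M)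
       + ennreal (\<kappa>^2 * D^2) * (\<integral>\<^sup>+\<omega>. ennreal (H \<omega> * (\<gamma> (Suc n) \<omega>)^2 * A (Suc n) \<omega>) \<partial>M)"
proof -
  define a where "a \<omega> = \<kappa> * \<gamma> (Suc n) \<omega>" for \<omega>
  define G where "G \<omega> = 2 * H \<omega> * A (Suc n) \<omega> * (1 - a \<omega>) * a \<omega>" for \<omega>
  define K where "K = 2 * exp (real (Suc n))"
  define c where "c = \<kappa>^2 * D^2"
  have c0: "0 \<le> c" unfolding c_def by simp
  have HM[measurable]: "H \<in> borel_measurable M" using measM[OF H(1)] .
  have [measurable]: "A (Suc n) \<in> borel_measurable M" "A n \<in> borel_measurable M" by (rule A_M)+
  have [measurable]: "V (Suc n) \<in> borel_measurable M" "V n \<in> borel_measurable M" by (rule V_M)+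
  have [measurable]: "\<gamma> (Suc n) \<in> borel_measurable M" by (rule g_M)
  have [measurable]: "e n \<in> borel_measurable M" by (rule e_M)
  have [measurable]: "xi (Suc n) \<in> borel_measurable M" by (rule xi_M)
  have GF: "G \<in> borel_measurable (F n)"
  proof -
    have [measurable]: "H \<in> borel_measurable (F n)" "A (Suc n) \<in> borel_measurable (F n)"
      "\<gamma> (Suc n) \<in> borel_measurable (F n)"
      using H(1) A_F[of "Suc n" n] gmeas[of n] by auto
    show ?thesis unfolding G_def a_def by measurable
  qed
  have GM[measurable]: "G \<in> borel_measurable M" using measM[OF GF] .
  have ab: "0 \<le> a \<omega>" "a \<omega> \<le> 1" if "goodw \<omega>" for \<omega>
    using that kpos unfolding goodw_def a_def by auto
  have Gb: "AE \<omega> in M. \<bar>G \<omega>\<bar> \<le> K"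
    using AE_good
  proof eventually_elim
    case (elim \<omega>)
    note a = ab[OF elim]
    have q: "0 \<le> (1 - a \<omega>) * a \<omega>" "(1 - a \<omega>) * a \<omega> \<le> 1" using a by (auto intro: mult_le_one)
    have Ab: "A (Suc n) \<omega> \<le> exp (real (Suc n))" using A_bound[OF elim] .
    have "H \<omega> * (A (Suc n) \<omega> * ((1 - a \<omega>) * a \<omega>)) \<le> 1 * (exp (real (Suc n)) * 1)"
      using H(2,3)[of \<omega>] q Ab A_pos[of "Suc n" \<omega>]
      by (intro mult_mono) auto
    moreover have "0 \<le> H \<omega> * (A (Suc n) \<omega> * ((1 - a \<omega>) * a \<omega>))"
      using H(2)[of \<omega>] q A_pos[of "Suc n" \<omega>] by simp
    ultimately show ?case unfolding G_def K_def by (simp add: mult.assoc)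
  qed
  define cross where "cross \<omega> = G \<omega> * (e n \<omega> \<bullet> xi (Suc n) \<omega>)" for \<omega>
  have ptw: "AE \<omega> in M. H \<omega> * A (Suc n) \<omega> * V (Suc n) \<omega>
      \<le> H \<omega> * A n \<omega> * V n \<omega> + cross \<omega> + c * (H \<omega> * (\<gamma> (Suc n) \<omega>)^2 * A (Suc n) \<omega>)"
    using AE_good AE_space
  proof eventually_elim
    case (elim \<omega>)
    note a = ab[OF elim(1)]
    have xb: "norm (xi (Suc n) \<omega>) \<le> D" using elim(1) unfolding goodw_def by auto
    have Vs: "V (Suc n) \<omega> = (1 - a \<omega>)^2 * V n \<omega> + 2 * (1 - a \<omega>) * a \<omega> * (e n \<omega> \<bullet> xi (Suc n) \<omega>)
        + (a \<omega>)^2 * (norm (xi (Suc n) \<omega>))^2"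
      unfolding V_def e_rec[OF elim(2)] norm_comb_sq a_def by simp
    have eq: "H \<omega> * A (Suc n) \<omega> * V (Suc n) \<omega> = H \<omega> * V n \<omega> * (A (Suc n) \<omega> * (1 - a \<omega>)^2) + cross \<omega>
        + H \<omega> * A (Suc n) \<omega> * ((a \<omega>)^2 * (norm (xi (Suc n) \<omega>))^2)"
      unfolding Vs cross_def G_def by (simp add: algebra_simps)
    have "A (Suc n) \<omega> * (1 - a \<omega>)^2 = A n \<omega> * (exp (a \<omega>) * (1 - a \<omega>)^2)"
      unfolding A_Suc a_def by simp
    also have "\<dots> \<le> A n \<omega> * 1" using exp_contr[OF a] A_pos[of n \<omega>] by (intro mult_left_mono) auto
    finally have fin: "A (Suc n) \<omega> * (1 - a \<omega>)^2 \<le> A n \<omega> * 1" .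
    have HV: "0 \<le> H \<omega> * V n \<omega>" using H(2)[of \<omega>] by (simp add: V_def)
    have t1: "H \<omega> * V n \<omega> * (A (Suc n) \<omega> * (1 - a \<omega>)^2) \<le> H \<omega> * A n \<omega> * V n \<omega>"
      using mult_left_mono[OF fin HV] by (simp add: mult_ac)
    have sq: "(a \<omega>)^2 * (norm (xi (Suc n) \<omega>))^2 \<le> (a \<omega>)^2 * D^2"
      using xb by (intro mult_left_mono power_mono) auto
    have HA: "0 \<le> H \<omega> * A (Suc n) \<omega>" using H(2)[of \<omega>] A_pos[of "Suc n" \<omega>] by simp
    have t3: "H \<omega> * A (Suc n) \<omega> * ((a \<omega>)^2 * (norm (xi (Suc n) \<omega>))^2)
        \<le> H \<omega> * A (Suc n) \<omega> * ((a \<omega>)^2 * D^2)"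
      using mult_left_mono[OF sq HA] .
    have t3': "H \<omega> * A (Suc n) \<omega> * ((a \<omega>)^2 * D^2) = c * (H \<omega> * (\<gamma> (Suc n) \<omega>)^2 * A (Suc n) \<omega>)"
      unfolding a_def c_def by (simp add: power_mult_distrib algebra_simps)
    show ?case unfolding eq using t1 t3 t3' by linarith
  qed
  have i1: "integrable M (\<lambda>\<omega>. H \<omega> * A (Suc n) \<omega> * V (Suc n) \<omega>)"
  proof (rule Bochner_Integration.integrable_bound[where f="\<lambda>\<omega>. exp (real (Suc n)) * V (Suc n) \<omega>"])
    show "integrable M (\<lambda>\<omega>. exp (real (Suc n)) * V (Suc n) \<omega>)" using intVn by simp
    show "(\<lambda>\<omega>. H \<omega> * A (Suc n) \<omega> * V (Suc n) \<omega>) \<in> borel_measurable M" by measurable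
    show "AE \<omega> in M. norm (H \<omega> * A (Suc n) \<omega> * V (Suc n) \<omega>) \<le> norm (exp (real (Suc n)) * V (Suc n) \<omega>)"
      using AE_good
    proof eventually_elim
      case (elim \<omega>)
      have "H \<omega> * A (Suc n) \<omega> * V (Suc n) \<omega> \<le> 1 * exp (real (Suc n)) * V (Suc n) \<omega>"
        using H(2,3)[of \<omega>] A_bound[OF elim, of "Suc n"] A_pos[of "Suc n" \<omega>]
        by (intro mult_mono) (auto simp: V_def)
      then show ?case using H(2)[of \<omega>] A_pos[of "Suc n" \<omega>] by (simp add: V_def)
    qed
  qed
  have i2: "integrable M (\<lambda>\<omega>. H \<omega> * A n \<omega> * V n \<omega>)"
  proof (rule Bochner_Integration.integrable_bound[where f="\<lambda>\<omega>. exp (real n) * V n \<omega>"])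
    show "integrable M (\<lambda>\<omega>. exp (real n) * V n \<omega>)" using intVn by simp
    show "(\<lambda>\<omega>. H \<omega> * A n \<omega> * V n \<omega>) \<in> borel_measurable M" by measurable
    show "AE \<omega> in M. norm (H \<omega> * A n \<omega> * V n \<omega>) \<le> norm (exp (real n) * V n \<omega>)"
      using AE_good
    proof eventually_elim
      case (elim \<omega>)
      have "H \<omega> * A n \<omega> * V n \<omega> \<le> 1 * exp (real n) * V n \<omega>"
        using H(2,3)[of \<omega>] A_bound[OF elim, of n] A_pos[of n \<omega>]
        by (intro mult_mono) (auto simp: V_def)
      then show ?case using H(2)[of \<omega>] A_pos[of n \<omega>] by (simp add: V_def)
    qed
  qed
  have i3: "integrable M (\<lambda>\<omega>. H \<omega> * (\<gamma> (Suc n) \<omega>)^2 * A (Suc n) \<omega>)"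
  proof (rule Bochner_Integration.integrable_bound[where f="\<lambda>\<omega>. exp (real (Suc n)) / \<kappa>^2"])
    show "integrable M (\<lambda>\<omega>. exp (real (Suc n)) / \<kappa>^2)" by simp
    show "(\<lambda>\<omega>. H \<omega> * (\<gamma> (Suc n) \<omega>)^2 * A (Suc n) \<omega>) \<in> borel_measurable M" by measurable
    show "AE \<omega> in M. norm (H \<omega> * (\<gamma> (Suc n) \<omega>)^2 * A (Suc n) \<omega>) \<le> norm (exp (real (Suc n)) / \<kappa>^2)"
      using AE_good
    proof eventually_elim
      case (elim \<omega>)
      have g: "0 \<le> \<gamma> (Suc n) \<omega>" "\<gamma> (Suc n) \<omega> \<le> 1 / \<kappa>"
        using elim kpos unfolding goodw_def by (auto simp: field_simps)
      have g2: "(\<gamma> (Suc n) \<omega>)^2 \<le> (1 / \<kappa>)^2" using g by (intro power_mono) auto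
      have "H \<omega> * (\<gamma> (Suc n) \<omega>)^2 * A (Suc n) \<omega> \<le> 1 * (1 / \<kappa>)^2 * exp (real (Suc n))"
        using H(2,3)[of \<omega>] A_bound[OF elim, of "Suc n"] A_pos[of "Suc n" \<omega>] g2
        by (intro mult_mono) auto
      then show ?case using H(2)[of \<omega>] A_pos[of "Suc n" \<omega>] by (simp add: power_divide)
    qed
  qed
  have ic: "integrable M cross"
  proof (rule Bochner_Integration.integrable_bound[where f="\<lambda>\<omega>. K * D * norm (e n \<omega>)"])
    show "integrable M (\<lambda>\<omega>. K * D * norm (e n \<omega>))" using intEn by simp
    show "cross \<in> borel_measurable M" unfolding cross_def by measurable
    show "AE \<omega> in M. norm (cross \<omega>) \<le> norm (K * D * norm (e n \<omega>))"
      using AE_good Gb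
    proof eventually_elim
      case (elim \<omega>)
      have xb: "norm (xi (Suc n) \<omega>) \<le> D" using elim(1) unfolding goodw_def by auto
      have "\<bar>e n \<omega> \<bullet> xi (Suc n) \<omega>\<bar> \<le> norm (e n \<omega>) * norm (xi (Suc n) \<omega>)"
        by (rule Cauchy_Schwarz_ineq2)
      also have "\<dots> \<le> norm (e n \<omega>) * D" using xb by (intro mult_left_mono) auto
      finally have ip: "\<bar>e n \<omega> \<bullet> xi (Suc n) \<omega>\<bar> \<le> norm (e n \<omega>) * D" .
      have "\<bar>cross \<omega>\<bar> = \<bar>G \<omega>\<bar> * \<bar>e n \<omega> \<bullet> xi (Suc n) \<omega>\<bar>" unfolding cross_def by (simp add: abs_mult)
      also have "\<dots> \<le> K * (norm (e n \<omega>) * D)" using elim(2) ip by (intro mult_mono) auto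
      finally show ?case using Dnn unfolding K_def by (simp add: algebra_simps)
    qed
  qed
  define U where "U i \<omega> = G \<omega> * e n \<omega> $ i" for i \<omega>
  have UF: "U i \<in> borel_measurable (F n)" for i
  proof -
    have "(\<lambda>\<omega>. e n \<omega> $ i) \<in> borel_measurable (F n)"
      by (rule measurable_compose[OF e_F]) (intro borel_measurable_continuous_onI linear_continuous_on bounded_linear_vec_nth)
    then show ?thesis unfolding U_def by (intro borel_measurable_times GF)
  qed
  have Ui: "integrable M (U i)" for i
  proof (rule Bochner_Integration.integrable_bound[where f="\<lambda>\<omega>. K * norm (e n \<omega>)"])
    show "integrable M (\<lambda>\<omega>. K * norm (e n \<omega>))" using intEn by simp
    show "U i \<in> borel_measurable M" using measM[OF UF] .
    show "AE \<omega> in M. norm (U i \<omega>) \<le> norm (K * norm (e n \<omega>))"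
      using Gb
    proof eventually_elim
      case (elim \<omega>)
      have "\<bar>U i \<omega>\<bar> \<le> K * norm (e n \<omega>)" unfolding U_def abs_mult
        using elim component_le_norm_cart[of "e n \<omega>" i] by (intro mult_mono) auto
      then show ?case unfolding K_def by simp
    qed
  qed
  have cross_eq: "cross \<omega> = (\<Sum>i\<in>UNIV. (1 / real Mb) * (\<Sum>m=1..Mb. U i \<omega> * X (Suc n) m \<omega> $ i) - U i \<omega> * \<mu> $ i)" for \<omega>
  proof -
    have "cross \<omega> = (\<Sum>i\<in>UNIV. U i \<omega> * xi (Suc n) \<omega> $ i)"
      unfolding cross_def U_def inner_vec_def by (simp add: sum_distrib_left mult.assoc)
    moreover have "U i \<omega> * xi (Suc n) \<omega> $ i = (1 / real Mb) * (\<Sum>m=1..Mb. U i \<omega> * X (Suc n) m \<omega> $ i) - U i \<omega> * \<mu> $ i" for i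
      unfolding xi_def by (simp add: sum_distrib_left algebra_simps)
    ultimately show ?thesis by simp
  qed
  have icomp: "integrable M (\<lambda>\<omega>. (1 / real Mb) * (\<Sum>m=1..Mb. U i \<omega> * X (Suc n) m \<omega> $ i) - U i \<omega> * \<mu> $ i)" for i
  proof -
    have s: "integrable M (\<lambda>\<omega>. \<Sum>m=1..Mb. U i \<omega> * X (Suc n) m \<omega> $ i)"
      using cross_zero_comp(2)[OF UF[of i] Ui[of i]] by (intro Bochner_Integration.integrable_sum) auto
    show ?thesis using s Ui[of i] by (intro Bochner_Integration.integrable_diff integrable_mult_right integrable_mult_left)
  qed
  have "integral\<^sup>L M cross = (\<Sum>i\<in>UNIV. integral\<^sup>L M (\<lambda>\<omega>. (1 / real Mb) * (\<Sum>m=1..Mb. U i \<omega> * X (Suc n) m \<omega> $ i) - U i \<omega> * \<mu> $ i))"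
    unfolding cross_eq by (rule Bochner_Integration.integral_sum) (use icomp in auto)
  also have "\<dots> = (\<Sum>i\<in>UNIV. (1 / real Mb) * (\<Sum>m=1..Mb. integral\<^sup>L M (U i) * \<mu> $ i) - integral\<^sup>L M (U i) * \<mu> $ i)"
  proof (intro sum.cong refl)
    fix i
    have s: "integrable M (\<lambda>\<omega>. \<Sum>m=1..Mb. U i \<omega> * X (Suc n) m \<omega> $ i)"
      using cross_zero_comp(2)[OF UF[of i] Ui[of i]] by (intro Bochner_Integration.integrable_sum) auto
    have "integral\<^sup>L M (\<lambda>\<omega>. \<Sum>m=1..Mb. U i \<omega> * X (Suc n) m \<omega> $ i) = (\<Sum>m=1..Mb. integral\<^sup>L M (U i) * \<mu> $ i)"
      using cross_zero_comp(1,2)[OF UF[of i] Ui[of i]] by (subst Bochner_Integration.integral_sum) auto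
    then show "integral\<^sup>L M (\<lambda>\<omega>. (1 / real Mb) * (\<Sum>m=1..Mb. U i \<omega> * X (Suc n) m \<omega> $ i) - U i \<omega> * \<mu> $ i)
      = (1 / real Mb) * (\<Sum>m=1..Mb. integral\<^sup>L M (U i) * \<mu> $ i) - integral\<^sup>L M (U i) * \<mu> $ i"
      using s Ui by (subst Bochner_Integration.integral_diff) auto
  qed
  also have "\<dots> = 0" using Mb by simp
  finally have c0int: "integral\<^sup>L M cross = 0" .
  have "integral\<^sup>L M (\<lambda>\<omega>. H \<omega> * A (Suc n) \<omega> * V (Suc n) \<omega>)
      \<le> integral\<^sup>L M (\<lambda>\<omega>. H \<omega> * A n \<omega> * V n \<omega> + cross \<omega> + c * (H \<omega> * (\<gamma> (Suc n) \<omega>)^2 * A (Suc n) \<omega>))"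
    using i1 i2 i3 ic ptw by (intro integral_mono_AE) auto
  also have "\<dots> = integral\<^sup>L M (\<lambda>\<omega>. H \<omega> * A n \<omega> * V n \<omega>) + c * integral\<^sup>L M (\<lambda>\<omega>. H \<omega> * (\<gamma> (Suc n) \<omega>)^2 * A (Suc n) \<omega>)"
    using i1 i2 i3 ic c0int by (simp add: Bochner_Integration.integral_add)
  finally have ineq: "integral\<^sup>L M (\<lambda>\<omega>. H \<omega> * A (Suc n) \<omega> * V (Suc n) \<omega>)
      \<le> integral\<^sup>L M (\<lambda>\<omega>. H \<omega> * A n \<omega> * V n \<omega>) + c * integral\<^sup>L M (\<lambda>\<omega>. H \<omega> * (\<gamma> (Suc n) \<omega>)^2 * A (Suc n) \<omega>)" .
  have nn1: "0 \<le> H \<omega> * A (Suc n) \<omega> * V (Suc n) \<omega>" for \<omega>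
    using H(2)[of \<omega>] A_pos[of "Suc n" \<omega>] unfolding V_def by (intro mult_nonneg_nonneg) auto
  have nn2: "0 \<le> H \<omega> * A n \<omega> * V n \<omega>" for \<omega>
    using H(2)[of \<omega>] A_pos[of n \<omega>] unfolding V_def by (intro mult_nonneg_nonneg) auto
  have nn3: "0 \<le> H \<omega> * (\<gamma> (Suc n) \<omega>)^2 * A (Suc n) \<omega>" for \<omega>
    using H(2)[of \<omega>] A_pos[of "Suc n" \<omega>] by (intro mult_nonneg_nonneg) auto
  have I2: "0 \<le> integral\<^sup>L M (\<lambda>\<omega>. H \<omega> * A n \<omega> * V n \<omega>)" using nn2 by (simp add: integral_nonneg)
  have I3: "0 \<le> integral\<^sup>L M (\<lambda>\<omega>. H \<omega> * (\<gamma> (Suc n) \<omega>)^2 * A (Suc n) \<omega>)" using nn3 by (simp add: integral_nonneg)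
  show ?thesis
    unfolding nn_integral_eq_integral[OF i1 AE_I2[OF nn1]] nn_integral_eq_integral[OF i2 AE_I2[OF nn2]]
      nn_integral_eq_integral[OF i3 AE_I2[OF nn3]] c_def[symmetric]
    using ineq I2 I3 c0 by (simp add: ennreal_plus[symmetric] ennreal_mult[symmetric] ennreal_leI del: ennreal_plus)
qed

end

context sgd_setup begin

definition "Hs t k \<omega> = (if \<forall>j<k. S j \<omega> < t then 1 else (0::real))"

lemma Hs_F: "k \<le> Suc n \<Longrightarrow> Hs t k \<in> borel_measurable (F n)"
proof -
  assume k: "k \<le> Suc n"
  have [measurable]: "S j \<in> borel_measurable (F n)" if "j < k" for j
    using S_F[of j n] that k by simp
  show ?thesis unfolding Hs_def by measurable
qed

lemma Hs_M[measurable]: "Hs t k \<in> borel_measurable M"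
  using measM[OF Hs_F[of k k]] by simp

lemma Hs_01: "0 \<le> Hs t k \<omega>" "Hs t k \<omega> \<le> 1"
  unfolding Hs_def by auto

lemma Hs_mono: "Hs t (Suc k) \<omega> \<le> Hs t k \<omega>"
  unfolding Hs_def by auto

lemma tele:
  shows "(\<integral>\<^sup>+\<omega>. (\<Sum>k. ennreal ((Hs t k \<omega> - Hs t (Suc k) \<omega>) * A k \<omega> * V k \<omega>)) \<partial>M)
     \<le> (\<integral>\<^sup>+\<omega>. ennreal (V 0 \<omega>) \<partial>M) + ennreal (\<kappa>^2 * D^2) *
        (\<integral>\<^sup>+\<omega>. (\<Sum>k. ennreal (Hs t (Suc k) \<omega> * (\<gamma> (Suc k) \<omega>)^2 * A (Suc k) \<omega>)) \<partial>M)"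
proof -
  define EE where "EE k = (\<integral>\<^sup>+\<omega>. ennreal ((Hs t k \<omega> - Hs t (Suc k) \<omega>) * A k \<omega> * V k \<omega>) \<partial>M)" for k
  define T where "T k = (\<integral>\<^sup>+\<omega>. ennreal (Hs t (Suc k) \<omega> * (\<gamma> (Suc k) \<omega>)^2 * A (Suc k) \<omega>) \<partial>M)" for k
  define P where "P n = (\<integral>\<^sup>+\<omega>. ennreal (Hs t n \<omega> * A n \<omega> * V n \<omega>) \<partial>M)" for n
  define C where "C = ennreal (\<kappa>^2 * D^2)"
  have [measurable]: "A k \<in> borel_measurable M" "V k \<in> borel_measurable M" "\<gamma> (Suc k) \<in> borel_measurable M" for k
    using A_M V_M g_M by auto
  have Vnn: "0 \<le> V k \<omega>" for k \<omega> unfolding V_def by simp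
  have step: "P (Suc n) + EE n \<le> P n + C * T n" for n
  proof -
    have a: "P (Suc n) \<le> (\<integral>\<^sup>+\<omega>. ennreal (Hs t (Suc n) \<omega> * A n \<omega> * V n \<omega>) \<partial>M) + C * T n"
      unfolding P_def T_def C_def by (rule one_step[OF Hs_F[of "Suc n" n] Hs_01]) simp
    have b: "(\<integral>\<^sup>+\<omega>. ennreal (Hs t (Suc n) \<omega> * A n \<omega> * V n \<omega>) \<partial>M) + EE n = P n"
      unfolding EE_def P_def
    proof (subst nn_integral_add[symmetric])
      show "(\<lambda>\<omega>. ennreal (Hs t (Suc n) \<omega> * A n \<omega> * V n \<omega>)) \<in> borel_measurable M" by measurable
      show "(\<lambda>\<omega>. ennreal ((Hs t n \<omega> - Hs t (Suc n) \<omega>) * A n \<omega> * V n \<omega>)) \<in> borel_measurable M" by measurable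
      show "(\<integral>\<^sup>+\<omega>. ennreal (Hs t (Suc n) \<omega> * A n \<omega> * V n \<omega>) + ennreal ((Hs t n \<omega> - Hs t (Suc n) \<omega>) * A n \<omega> * V n \<omega>) \<partial>M)
          = (\<integral>\<^sup>+\<omega>. ennreal (Hs t n \<omega> * A n \<omega> * V n \<omega>) \<partial>M)"
      proof (intro nn_integral_cong)
        fix \<omega>
        have x: "0 \<le> Hs t (Suc n) \<omega> * A n \<omega> * V n \<omega>"
          using Hs_01[of t "Suc n" \<omega>] A_pos[of n \<omega>] Vnn[of n \<omega>] by (intro mult_nonneg_nonneg) auto
        have y: "0 \<le> (Hs t n \<omega> - Hs t (Suc n) \<omega>) * A n \<omega> * V n \<omega>"
          using Hs_mono[of t n \<omega>] A_pos[of n \<omega>] Vnn[of n \<omega>] by (intro mult_nonneg_nonneg) auto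
        show "ennreal (Hs t (Suc n) \<omega> * A n \<omega> * V n \<omega>) + ennreal ((Hs t n \<omega> - Hs t (Suc n) \<omega>) * A n \<omega> * V n \<omega>)
          = ennreal (Hs t n \<omega> * A n \<omega> * V n \<omega>)"
          using x y by (simp add: ennreal_plus[symmetric] algebra_simps del: ennreal_plus)
      qed
    qed
    have "P (Suc n) + EE n \<le> ((\<integral>\<^sup>+\<omega>. ennreal (Hs t (Suc n) \<omega> * A n \<omega> * V n \<omega>) \<partial>M) + C * T n) + EE n"
      using a by (rule add_right_mono)
    also have "\<dots> = P n + C * T n" using b by (simp add: ac_simps)
    finally show ?thesis .
  qed
  have main: "P n + (\<Sum>k<n. EE k) \<le> P 0 + C * (\<Sum>k<n. T k)" for n
  proof (induction n)
    case 0 then show ?case by simp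
  next
    case (Suc n)
    have "P (Suc n) + (\<Sum>k<Suc n. EE k) = (P (Suc n) + EE n) + (\<Sum>k<n. EE k)" by (simp add: ac_simps)
    also have "\<dots> \<le> (P n + C * T n) + (\<Sum>k<n. EE k)" using step by (rule add_right_mono)
    also have "\<dots> = (P n + (\<Sum>k<n. EE k)) + C * T n" by (simp add: ac_simps)
    also have "\<dots> \<le> (P 0 + C * (\<Sum>k<n. T k)) + C * T n" using Suc.IH by (rule add_right_mono)
    also have "\<dots> = P 0 + C * (\<Sum>k<Suc n. T k)" by (simp add: ac_simps distrib_left)
    finally show ?case .
  qed
  have P0: "P 0 = (\<integral>\<^sup>+\<omega>. ennreal (V 0 \<omega>) \<partial>M)"
    unfolding P_def Hs_def A_def S_0 by simp
  have "(\<Sum>k<n. EE k) \<le> P 0 + C * (\<Sum>k. T k)" for n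
  proof -
    have "(\<Sum>k<n. EE k) \<le> P n + (\<Sum>k<n. EE k)" by simp
    also have "\<dots> \<le> P 0 + C * (\<Sum>k<n. T k)" by (rule main)
    also have "\<dots> \<le> P 0 + C * (\<Sum>k. T k)"
      by (intro add_left_mono mult_left_mono sum_le_suminf) (auto intro: summableI)
    finally show ?thesis .
  qed
  then have "(\<Sum>k. EE k) \<le> P 0 + C * (\<Sum>k. T k)"
    by (intro suminf_le_const summableI)
  moreover have "(\<integral>\<^sup>+\<omega>. (\<Sum>k. ennreal ((Hs t k \<omega> - Hs t (Suc k) \<omega>) * A k \<omega> * V k \<omega>)) \<partial>M) = (\<Sum>k. EE k)"
    unfolding EE_def by (rule nn_integral_suminf) measurable
  moreover have "(\<integral>\<^sup>+\<omega>. (\<Sum>k. ennreal (Hs t (Suc k) \<omega> * (\<gamma> (Suc k) \<omega>)^2 * A (Suc k) \<omega>)) \<partial>M) = (\<Sum>k. T k)"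
    unfolding T_def by (rule nn_integral_suminf) measurable
  ultimately show ?thesis using P0 unfolding C_def by simp
qed

end


lemma tele_bound:
  fixes g :: "nat \<Rightarrow> real" and \<kappa> :: real
  assumes k: "0 < \<kappa>" and g: "\<And>k. 0 \<le> g k" "\<And>k. \<kappa> * g k \<le> 1"
  shows "(\<Sum>k<N. \<kappa> * g k * exp (\<kappa> * (\<Sum>j<Suc k. g j))) \<le> exp 1 * exp (\<kappa> * (\<Sum>j<N. g j))"
proof -
  define a where "a n = exp (\<kappa> * (\<Sum>j<n. g j))" for n
  have tm: "\<kappa> * g k * a (Suc k) \<le> exp 1 * (a (Suc k) - a k)" for k
  proof -
    have as: "a (Suc k) = exp (\<kappa> * g k) * a k" unfolding a_def by (simp add: distrib_left exp_add)
    have x: "0 \<le> \<kappa> * g k" "\<kappa> * g k \<le> 1" using k g[of k] by auto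
    have "\<kappa> * g k * exp (\<kappa> * g k) \<le> \<kappa> * g k * exp 1" using x by (intro mult_left_mono) auto
    also have "\<dots> \<le> (exp (\<kappa> * g k) - 1) * exp 1"
    proof -
      have "\<kappa> * g k \<le> exp (\<kappa> * g k) - 1" using exp_ge_add_one_self[of "\<kappa> * g k"] by linarith
      then show ?thesis by (rule mult_right_mono) simp
    qed
    finally have "\<kappa> * g k * exp (\<kappa> * g k) * a k \<le> (exp (\<kappa> * g k) - 1) * exp 1 * a k"
      by (intro mult_right_mono) (auto simp: a_def)
    then show ?thesis unfolding as by (simp add: algebra_simps)
  qed
  have "(\<Sum>k<N. \<kappa> * g k * a (Suc k)) \<le> (\<Sum>k<N. exp 1 * (a (Suc k) - a k))"
    by (intro sum_mono tm)
  also have "\<dots> = exp 1 * (\<Sum>k<N. a (Suc k) - a k)" by (rule sum_distrib_left[symmetric])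
  also have "\<dots> = exp 1 * (a N - a 0)" by (simp only: sum_lessThan_telescope)
  also have "\<dots> \<le> exp 1 * a N" by (simp add: a_def)
  finally show ?thesis unfolding a_def .
qed

lemma R_bound:
  fixes g :: "nat \<Rightarrow> real" and \<kappa> :: real
  assumes k: "0 < \<kappa>" and g: "\<And>k. 0 \<le> g k" "\<And>k. \<kappa> * g k \<le> 1"
  shows "(\<Sum>k<N. (g k)^2 * exp (\<kappa> * (\<Sum>j<Suc k. g j))) \<le> exp 1 / \<kappa>^2 * exp (\<kappa> * (\<Sum>j<N. g j))"
proof -
  have "(g k)^2 * exp (\<kappa> * (\<Sum>j<Suc k. g j)) \<le> (1 / \<kappa>^2) * (\<kappa> * g k * exp (\<kappa> * (\<Sum>j<Suc k. g j)))" for k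
  proof -
    have "g k * g k \<le> g k * (1 / \<kappa>)" using g[of k] k by (intro mult_left_mono) (auto simp: field_simps)
    then have "(g k)^2 \<le> (1 / \<kappa>^2) * (\<kappa> * g k)" using k by (simp add: power2_eq_square field_simps)
    from mult_right_mono[OF this, of "exp (\<kappa> * (\<Sum>j<Suc k. g j))"]
    show ?thesis by (simp add: mult.assoc)
  qed
  then have "(\<Sum>k<N. (g k)^2 * exp (\<kappa> * (\<Sum>j<Suc k. g j))) \<le> (\<Sum>k<N. (1 / \<kappa>^2) * (\<kappa> * g k * exp (\<kappa> * (\<Sum>j<Suc k. g j))))"
    by (intro sum_mono)
  also have "\<dots> = (1 / \<kappa>^2) * (\<Sum>k<N. \<kappa> * g k * exp (\<kappa> * (\<Sum>j<Suc k. g j)))" by (simp add: sum_distrib_left)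
  also have "\<dots> \<le> (1 / \<kappa>^2) * (exp 1 * exp (\<kappa> * (\<Sum>j<N. g j)))"
    using tele_bound[OF k g] by (intro mult_left_mono) auto
  finally show ?thesis by simp
qed

lemma R_lim:
  fixes g :: "nat \<Rightarrow> real" and \<kappa> :: real and N :: "real \<Rightarrow> nat"
  assumes k: "0 < \<kappa>" and g: "\<And>k. 0 \<le> g k" "\<And>k. \<kappa> * g k \<le> 1"
    and lim: "g \<longlonglongrightarrow> 0"
    and Nt: "\<And>t. t \<ge> 0 \<Longrightarrow> \<kappa> * (\<Sum>j<N t. g j) \<le> \<kappa> * t + 1"
  shows "((\<lambda>t. exp (- \<kappa> * t) * (\<Sum>k<N t. (g k)^2 * exp (\<kappa> * (\<Sum>j<Suc k. g j)))) \<longlongrightarrow> 0) at_top"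
proof (rule tendstoI)
  fix \<epsilon> :: real assume e: "0 < \<epsilon>"
  define b where "b n = exp (\<kappa> * (\<Sum>j<n. g j))" for n
  define f where "f k = (g k)^2 * b (Suc k)" for k
  define \<epsilon>' where "\<epsilon>' = \<epsilon> * \<kappa> / (2 * exp 2)"
  have e': "0 < \<epsilon>'" unfolding \<epsilon>'_def using e k by simp
  from lim e' have "eventually (\<lambda>k. dist (g k) 0 < \<epsilon>') sequentially" by (rule tendstoD)
  then obtain k0 where k0: "\<And>k. k \<ge> k0 \<Longrightarrow> g k < \<epsilon>'"
    unfolding eventually_sequentially using g by (force simp: dist_real_def)
  define C0 where "C0 = (\<Sum>k<k0. f k)"
  have fnn: "0 \<le> f k" for k unfolding f_def b_def by simp
  have C0nn: "0 \<le> C0" unfolding C0_def using fnn by (simp add: sum_nonneg)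
  have bound: "(\<Sum>k<N t. f k) \<le> C0 + \<epsilon> / 2 * exp (\<kappa> * t)" if t: "t \<ge> 0" for t
  proof -
    have fk: "f k \<le> (if k \<in> {..<k0} then f k else 0) + \<epsilon>' / \<kappa> * (\<kappa> * g k * b (Suc k))" for k
    proof (cases "k < k0")
      case True then show ?thesis using e' k g[of k] by (simp add: b_def)
    next
      case False
      then have "g k \<le> \<epsilon>'" using k0[of k] by simp
      then have "g k * g k \<le> \<epsilon>' * g k" using g[of k] by (intro mult_right_mono) auto
      then have "f k \<le> \<epsilon>' * g k * b (Suc k)" unfolding f_def
        by (intro mult_right_mono) (auto simp: power2_eq_square b_def)
      then show ?thesis using False k by simp
    qed
    have S1: "(\<Sum>k<N t. f k) \<le> (\<Sum>k<N t. (if k \<in> {..<k0} then f k else 0)) + \<epsilon>' / \<kappa> * (\<Sum>k<N t. \<kappa> * g k * b (Suc k))"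
    proof -
      have "(\<Sum>k<N t. f k) \<le> (\<Sum>k<N t. (if k \<in> {..<k0} then f k else 0) + \<epsilon>' / \<kappa> * (\<kappa> * g k * b (Suc k)))"
        by (rule sum_mono) (rule fk)
      then show ?thesis by (simp add: sum.distrib sum_distrib_left)
    qed
    have "(\<Sum>k<N t. (if k \<in> {..<k0} then f k else 0)) = (\<Sum>k\<in>{..<N t} \<inter> {..<k0}. f k)"
      by (simp add: sum.inter_restrict)
    also have "\<dots> \<le> C0" unfolding C0_def using fnn by (intro sum_mono2) auto
    finally have S2: "(\<Sum>k<N t. (if k \<in> {..<k0} then f k else 0)) \<le> C0" .
    have "(\<Sum>k<N t. \<kappa> * g k * b (Suc k)) \<le> exp 1 * b (N t)"
      unfolding b_def by (rule tele_bound[OF k g])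
    also have "b (N t) \<le> exp (\<kappa> * t + 1)" unfolding b_def using Nt[OF t] by simp
    finally have S3: "(\<Sum>k<N t. \<kappa> * g k * b (Suc k)) \<le> exp 1 * exp (\<kappa> * t + 1)" by simp
    have S4: "\<epsilon>' / \<kappa> * (\<Sum>k<N t. \<kappa> * g k * b (Suc k)) \<le> \<epsilon>' / \<kappa> * (exp 1 * exp (\<kappa> * t + 1))"
      using mult_left_mono[OF S3, of "\<epsilon>' / \<kappa>"] e' k by simp
    have "(\<Sum>k<N t. f k) \<le> C0 + \<epsilon>' / \<kappa> * (exp 1 * exp (\<kappa> * t + 1))"
      using S1 S2 S4 by linarith
    also have "\<epsilon>' / \<kappa> * (exp 1 * exp (\<kappa> * t + 1)) = \<epsilon> / 2 * exp (\<kappa> * t)"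
      unfolding \<epsilon>'_def using k by (simp add: exp_add field_simps) (simp add: mult_exp_exp)
    finally show ?thesis .
  qed
  define T0 where "T0 = max 0 (2 * C0 / (\<epsilon> * \<kappa>))"
  show "eventually (\<lambda>t. dist (exp (- \<kappa> * t) * (\<Sum>k<N t. (g k)^2 * exp (\<kappa> * (\<Sum>j<Suc k. g j)))) 0 < \<epsilon>) at_top"
    unfolding eventually_at_top_linorder
  proof (intro exI allI impI)
    fix t assume tT: "t \<ge> T0 + 1"
    then have t: "t \<ge> 0" "t > 2 * C0 / (\<epsilon> * \<kappa>)" unfolding T0_def by auto
    have sumeq: "(\<Sum>k<N t. (g k)^2 * exp (\<kappa> * (\<Sum>j<Suc k. g j))) = (\<Sum>k<N t. f k)"
      unfolding f_def b_def ..
    have "\<kappa> * t > 2 * C0 / \<epsilon>" using t k e by (simp add: field_simps)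
    then have "exp (\<kappa> * t) > 2 * C0 / \<epsilon>" using exp_ge_add_one_self[of "\<kappa> * t"] by linarith
    then have small: "C0 < \<epsilon> / 2 * exp (\<kappa> * t)" using e by (simp add: field_simps)
    have "exp (- \<kappa> * t) * (\<Sum>k<N t. f k) \<le> exp (- \<kappa> * t) * (C0 + \<epsilon> / 2 * exp (\<kappa> * t))"
      using bound[OF t(1)] by (intro mult_left_mono) auto
    also have "\<dots> < exp (- \<kappa> * t) * (\<epsilon> / 2 * exp (\<kappa> * t) + \<epsilon> / 2 * exp (\<kappa> * t))"
      using small by (intro mult_strict_left_mono) auto
    also have "\<dots> = \<epsilon>" by (simp add: exp_minus field_simps)
    finally have lt: "exp (- \<kappa> * t) * (\<Sum>k<N t. f k) < \<epsilon>" .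
    have "0 \<le> exp (- \<kappa> * t) * (\<Sum>k<N t. f k)" using fnn by (simp add: sum_nonneg)
    then show "dist (exp (- \<kappa> * t) * (\<Sum>k<N t. (g k)^2 * exp (\<kappa> * (\<Sum>j<Suc k. g j)))) 0 < \<epsilon>"
      unfolding sumeq using lt by (simp add: dist_real_def)
  qed
qed


lemma gamma_path:
  fixes x :: "nat \<Rightarrow> real"
  assumes mono: "\<And>n. n \<ge> 1 \<Longrightarrow> x (Suc n) \<le> x n" and ls: "limsup (\<lambda>n. ereal (x n)) = 0"
  shows "\<And>n. 0 \<le> x (Suc n)" and "(\<lambda>n. x (Suc n)) \<longlonglongrightarrow> 0"
proof -
  define y where "y n = ereal (x (Suc n))" for n
  have dec: "decseq y" unfolding decseq_Suc_iff y_def using mono by auto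
  have L: "y \<longlonglongrightarrow> (INF n. y n)" by (rule LIMSEQ_INF[OF dec])
  then have "(\<lambda>n. ereal (x n)) \<longlonglongrightarrow> (INF n. y n)"
    unfolding y_def by (subst filterlim_sequentially_Suc[symmetric])
  then have "limsup (\<lambda>n. ereal (x n)) = (INF n. y n)"
    by (intro lim_imp_Limsup) auto
  then have I0: "(INF n. y n) = 0" using ls by simp
  show "0 \<le> x (Suc n)" for n
  proof -
    have "(INF n. y n) \<le> y n" by (rule INF_lower) simp
    then show ?thesis using I0 unfolding y_def by simp
  qed
  from L I0 have "(\<lambda>n. ereal (x (Suc n))) \<longlonglongrightarrow> 0" unfolding y_def by simp
  then show "(\<lambda>n. x (Suc n)) \<longlonglongrightarrow> 0" by (simp only: zero_ereal_def lim_ereal)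
qed





lemma rec_alg:
  fixes \<theta> \<mu> :: "real^'d" and Y :: "nat \<Rightarrow> real^'d" and g \<kappa> :: real
  assumes "Mb \<ge> 1"
  shows "\<theta> - (g / real Mb) *\<^sub>R (\<Sum>m=1..Mb. \<kappa> *\<^sub>R (\<theta> - Y m)) - \<mu>
    = (1 - \<kappa> * g) *\<^sub>R (\<theta> - \<mu>) + (\<kappa> * g) *\<^sub>R ((1 / real Mb) *\<^sub>R (\<Sum>m=1..Mb. Y m) - \<mu>)"
proof -
  have Mb: "real Mb \<noteq> 0" using assms by simp
  have "(\<Sum>m=1..Mb. \<kappa> *\<^sub>R (\<theta> - Y m)) = (\<kappa> * real Mb) *\<^sub>R \<theta> - \<kappa> *\<^sub>R (\<Sum>m=1..Mb. Y m)"
    by (simp add: scaleR_diff_right sum_subtractf scaleR_sum_right[symmetric] sum_constant_scaleR del: sum_constant)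
  then have "(g / real Mb) *\<^sub>R (\<Sum>m=1..Mb. \<kappa> *\<^sub>R (\<theta> - Y m)) = (g * \<kappa>) *\<^sub>R \<theta> - (g * \<kappa> / real Mb) *\<^sub>R (\<Sum>m=1..Mb. Y m)"
    using Mb by (simp add: scaleR_diff_right)
  then show ?thesis by (simp add: algebra_simps)
qed

theorem corollary4p15:
  fixes \<kappa> :: real
    and l :: "real^'d \<Rightarrow> real^'d \<Rightarrow> real"
    and M :: "'w measure"
    and F :: "nat \<Rightarrow> 'w measure"
    and \<gamma> :: "nat \<Rightarrow> 'w \<Rightarrow> real"
    and Mb :: nat
    and X :: "nat \<Rightarrow> nat \<Rightarrow> 'w \<Rightarrow> real^'d"
    and \<Theta> :: "nat \<Rightarrow> 'w \<Rightarrow> real^'d"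
    and N :: "real \<Rightarrow> 'w \<Rightarrow> nat"
  assumes kappa_pos: "0 < \<kappa>"
    and l_def: "\<And>\<theta> x. l \<theta> x = \<kappa> / 2 * (norm (\<theta> - x))^2"
    and prob: "prob_space M"
    and filt: "filtration (space M) F"
    and sub: "\<And>n. subalgebra M (F n)"
    and gamma_meas: "\<And>n. n \<ge> 1 \<Longrightarrow> \<gamma> n \<in> borel_measurable (F (n - 1))"
    and gamma_limsup: "AE \<omega> in M. limsup (\<lambda>n. ereal (\<gamma> n \<omega>)) = 0"
    and gamma_sum: "AE \<omega> in M. (\<Sum>n. ennreal \<bar>\<gamma> (Suc n) \<omega>\<bar>) = \<infinity>"
    and gamma_mono: "\<And>n. n \<ge> 1 \<Longrightarrow>
        (AE \<omega> in M. \<gamma> (Suc n) \<omega> \<le> \<gamma> n \<omega> \<and> \<gamma> n \<omega> \<le> 1 / \<kappa>)"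
    and Mb_pos: "Mb \<ge> 1"
    and X_rv: "\<And>n m. n \<ge> 1 \<Longrightarrow> m \<in> {1..Mb} \<Longrightarrow> X n m \<in> borel_measurable M"
    and X_indep: "prob_space.indep_vars M (\<lambda>_. borel) (\<lambda>(n, m). X n m)
        {(n, m). n \<ge> 1 \<and> m \<in> {1..Mb}}"
    and X_ident: "\<And>n m. n \<ge> 1 \<Longrightarrow> m \<in> {1..Mb} \<Longrightarrow>
        distr M borel (X n m) = distr M borel (X 1 1)"
    and Theta_adapted: "\<And>n. \<Theta> n \<in> borel_measurable (F n)"
    and Theta_rec: "\<And>n \<omega>. n \<ge> 1 \<Longrightarrow> \<omega> \<in> space M \<Longrightarrow>
        \<Theta> n \<omega> = \<Theta> (n - 1) \<omega> -
          (\<gamma> n \<omega> / real Mb) *\<^sub>R (\<Sum>m = 1..Mb. grad1 l (\<Theta> (n - 1) \<omega>) (X n m \<omega>))"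
    and X_adapted: "\<And>n m. n \<ge> 1 \<Longrightarrow> m \<in> {1..Mb} \<Longrightarrow> X n m \<in> borel_measurable (F n)"
    and X_indep_past: "\<And>n. n \<ge> 1 \<Longrightarrow> prob_space.indep_set M
        (sigma_sets (space M) (\<Union>m\<in>{1..Mb}. {X n m -` A \<inter> space M | A. A \<in> sets borel}))
        (sets (F (n - 1)))"
    and moment: "(\<integral>\<^sup>+ \<omega>. ennreal ((norm (\<Theta> 0 \<omega>))^2)
        + (SUP n\<in>{1..}. ennreal (norm (X n 1 \<omega>))) \<partial>M) < \<infinity>"
    and N_def: "\<And>t \<omega>. t \<ge> 0 \<Longrightarrow> N t \<omega> = Inf {n. (\<Sum>k = 1..n. \<gamma> k \<omega>) \<ge> t}"
  shows "Limsup at_top (\<lambda>t. \<integral>\<^sup>+ \<omega>. ennreal ((norm (\<Theta> (N t \<omega>) \<omega> - integral\<^sup>L M (X 1 1)))^2) \<partial>M) = 0"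
proof -
  interpret prob_space M by (rule prob)
  define \<mu> where "\<mu> = integral\<^sup>L M (X 1 1)"
  have Mb1: "1 \<in> {1..Mb}" using Mb_pos by auto
  have momX: "(\<integral>\<^sup>+\<omega>. (SUP n\<in>{1..}. ennreal (norm (X n 1 \<omega>))) \<partial>M) < \<infinity>"
  proof -
    have "(\<integral>\<^sup>+\<omega>. (SUP n\<in>{1..}. ennreal (norm (X n 1 \<omega>))) \<partial>M)
      \<le> (\<integral>\<^sup>+ \<omega>. ennreal ((norm (\<Theta> 0 \<omega>))^2) + (SUP n\<in>{1..}. ennreal (norm (X n 1 \<omega>))) \<partial>M)"
      by (intro nn_integral_mono) simp
    then show ?thesis using moment by simp
  qed
  obtain B where B: "AE \<omega> in M. \<forall>n m. n \<ge> 1 \<longrightarrow> m \<in> {1..Mb} \<longrightarrow> norm (X n m \<omega>) \<le> B"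
    using X_bounded[OF Mb_pos X_rv X_indep X_ident momX] by blast
  define D where "D = \<bar>B\<bar> + norm \<mu>"
  have gAE: "AE \<omega> in M. \<forall>n. n \<ge> 1 \<longrightarrow> \<gamma> (Suc n) \<omega> \<le> \<gamma> n \<omega> \<and> \<gamma> n \<omega> \<le> 1 / \<kappa>"
  proof (subst AE_all_countable, intro allI)
    fix n show "AE \<omega> in M. n \<ge> 1 \<longrightarrow> \<gamma> (Suc n) \<omega> \<le> \<gamma> n \<omega> \<and> \<gamma> n \<omega> \<le> 1 / \<kappa>"
      by (cases "n \<ge> 1") (use gamma_mono[of n] in auto)
  qed
  have G1: "AE \<omega> in M. (\<forall>n. 0 \<le> \<gamma> (Suc n) \<omega> \<and> \<kappa> * \<gamma> (Suc n) \<omega> \<le> 1) \<and> (\<lambda>n. \<gamma> (Suc n) \<omega>) \<longlonglongrightarrow> 0"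
    using gAE gamma_limsup
  proof eventually_elim
    case (elim \<omega>)
    have m: "\<And>n. n \<ge> 1 \<Longrightarrow> \<gamma> (Suc n) \<omega> \<le> \<gamma> n \<omega>" using elim(1) by auto
    note gp = gamma_path[of "\<lambda>n. \<gamma> n \<omega>", OF m elim(2)]
    have "\<kappa> * \<gamma> (Suc n) \<omega> \<le> 1" for n
    proof -
      have "\<gamma> (Suc n) \<omega> \<le> 1 / \<kappa>" using elim(1) by auto
      then show ?thesis using kappa_pos by (simp add: field_simps)
    qed
    then show ?case using gp by auto
  qed
  have Sg: "(\<Sum>k=1..n. \<gamma> k \<omega>) = (\<Sum>k<n. \<gamma> (Suc k) \<omega>)" for n \<omega>
    by (simp add: sum.atLeast1_atMost_eq)
  have G2: "AE \<omega> in M. \<forall>t. \<exists>n. t \<le> (\<Sum>k=1..n. \<gamma> k \<omega>)"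
    using G1 gamma_sum
  proof eventually_elim
    case (elim \<omega>)
    show ?case
    proof (rule ccontr)
      assume "\<not> (\<forall>t. \<exists>n. t \<le> (\<Sum>k=1..n. \<gamma> k \<omega>))"
      then obtain t where t: "\<And>n. (\<Sum>k=1..n. \<gamma> k \<omega>) < t" by (auto simp: not_le)
      have "(\<Sum>n. ennreal \<bar>\<gamma> (Suc n) \<omega>\<bar>) \<le> ennreal t"
      proof (intro suminf_le_const summableI)
        fix K
        have "(\<Sum>n<K. ennreal \<bar>\<gamma> (Suc n) \<omega>\<bar>) = ennreal (\<Sum>n<K. \<gamma> (Suc n) \<omega>)"
          using elim(1) by (simp add: sum_ennreal)
        also have "\<dots> \<le> ennreal t" using t[of K] unfolding Sg by (intro ennreal_leI) simp
        finally show "(\<Sum>n<K. ennreal \<bar>\<gamma> (Suc n) \<omega>\<bar>) \<le> ennreal t" .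
      qed
      then show False using elim(2) by (auto simp: top_unique)
    qed
  qed
  have xib: "AE \<omega> in M. \<forall>n. norm ((1 / real Mb) *\<^sub>R (\<Sum>m=1..Mb. X (Suc n) m \<omega>) - \<mu>) \<le> D"
    using B
  proof eventually_elim
    case (elim \<omega>)
    show ?case
    proof
      fix n
      have "norm (\<Sum>m=1..Mb. X (Suc n) m \<omega>) \<le> (\<Sum>m=1..Mb. norm (X (Suc n) m \<omega>))" by (rule norm_sum)
      also have "\<dots> \<le> (\<Sum>m=1..Mb. \<bar>B\<bar>)" using elim by (intro sum_mono order_trans[OF _ abs_ge_self]) auto
      also have "\<dots> = real Mb * \<bar>B\<bar>" by simp
      finally have "norm ((1 / real Mb) *\<^sub>R (\<Sum>m=1..Mb. X (Suc n) m \<omega>)) \<le> \<bar>B\<bar>"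
        using Mb_pos by (simp add: field_simps)
      then show "norm ((1 / real Mb) *\<^sub>R (\<Sum>m=1..Mb. X (Suc n) m \<omega>) - \<mu>) \<le> D"
        unfolding D_def using norm_triangle_ineq4 by (smt (verit))
    qed
  qed
  have Fmono: "\<And>i j. i \<le> j \<Longrightarrow> sets (F i) \<subseteq> sets (F j)"
    using filtration.sets_F_mono[OF filt] by blast
  have gmeas: "\<And>n. \<gamma> (Suc n) \<in> borel_measurable (F n)" using gamma_meas by force
  have Xmeas: "\<And>n m. m \<in> {1..Mb} \<Longrightarrow> X (Suc n) m \<in> borel_measurable M" using X_rv by force
  have Xint: "\<And>n m. m \<in> {1..Mb} \<Longrightarrow> integrable M (X (Suc n) m)"
  proof -
    fix n m assume m: "m \<in> {1..Mb}"
    show "integrable M (X (Suc n) m)"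
    proof (rule Bochner_Integration.integrable_bound[where f="\<lambda>_. \<bar>B\<bar>"])
      show "integrable M (\<lambda>_. \<bar>B\<bar>)" by simp
      show "X (Suc n) m \<in> borel_measurable M" using Xmeas[OF m] .
      show "AE \<omega> in M. norm (X (Suc n) m \<omega>) \<le> norm \<bar>B\<bar>" using B by eventually_elim (use m in \<open>auto intro: order_trans[OF _ abs_ge_self]\<close>)
    qed
  qed
  have Xmean: "\<And>n m. m \<in> {1..Mb} \<Longrightarrow> integral\<^sup>L M (X (Suc n) m) = \<mu>"
  proof -
    fix n m assume m: "m \<in> {1..Mb}"
    have "integral\<^sup>L M (X (Suc n) m) = integral\<^sup>L (distr M borel (X (Suc n) m)) (\<lambda>x. x)"
      using integral_distr[OF Xmeas[OF m], of "\<lambda>x. x"] by simp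
    also have "\<dots> = integral\<^sup>L (distr M borel (X 1 1)) (\<lambda>x. x)" using X_ident[of "Suc n" m] m by simp
    also have "\<dots> = \<mu>" unfolding \<mu>_def using integral_distr[OF X_rv[OF _ Mb1], of 1 "\<lambda>x. x"] by simp
    finally show "integral\<^sup>L M (X (Suc n) m) = \<mu>" .
  qed
  have Xind: "\<And>n. indep_set (sigma_sets (space M) (\<Union>m\<in>{1..Mb}. {X (Suc n) m -` A \<inter> space M | A. A \<in> sets borel})) (sets (F n))"
    using X_indep_past by force
  have rec: "\<And>n \<omega>. \<omega> \<in> space M \<Longrightarrow> \<Theta> (Suc n) \<omega> - \<mu> = (1 - \<kappa> * \<gamma> (Suc n) \<omega>) *\<^sub>R (\<Theta> n \<omega> - \<mu>)
        + (\<kappa> * \<gamma> (Suc n) \<omega>) *\<^sub>R ((1 / real Mb) *\<^sub>R (\<Sum>m=1..Mb. X (Suc n) m \<omega>) - \<mu>)"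
  proof -
    fix n \<omega> assume \<omega>: "\<omega> \<in> space M"
    have "\<Theta> (Suc n) \<omega> = \<Theta> n \<omega> - (\<gamma> (Suc n) \<omega> / real Mb) *\<^sub>R (\<Sum>m=1..Mb. \<kappa> *\<^sub>R (\<Theta> n \<omega> - X (Suc n) m \<omega>))"
      using Theta_rec[of "Suc n" \<omega>] \<omega> by (simp add: grad1_sq[OF l_def])
    then show "\<Theta> (Suc n) \<omega> - \<mu> = (1 - \<kappa> * \<gamma> (Suc n) \<omega>) *\<^sub>R (\<Theta> n \<omega> - \<mu>)
        + (\<kappa> * \<gamma> (Suc n) \<omega>) *\<^sub>R ((1 / real Mb) *\<^sub>R (\<Sum>m=1..Mb. X (Suc n) m \<omega>) - \<mu>)"
      using rec_alg[OF Mb_pos] by simp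
  qed
  have good: "AE \<omega> in M. \<forall>n. 0 \<le> \<gamma> (Suc n) \<omega> \<and> \<kappa> * \<gamma> (Suc n) \<omega> \<le> 1 \<and>
        norm ((1 / real Mb) *\<^sub>R (\<Sum>m=1..Mb. X (Suc n) m \<omega>) - \<mu>) \<le> D"
    using G1 xib by eventually_elim auto
  have Dnn: "0 \<le> D" unfolding D_def by simp
  have V0: "integrable M (\<lambda>\<omega>. (norm (\<Theta> 0 \<omega> - \<mu>))^2)"
  proof -
    have [measurable]: "\<Theta> 0 \<in> borel_measurable M" using measurable_from_subalg[OF sub Theta_adapted[of 0]] .
    have T0: "integrable M (\<lambda>\<omega>. (norm (\<Theta> 0 \<omega>))^2)"
    proof (rule integrableI_nonneg)
      show "(\<lambda>\<omega>. (norm (\<Theta> 0 \<omega>))^2) \<in> borel_measurable M" by measurable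
      show "AE \<omega> in M. 0 \<le> (norm (\<Theta> 0 \<omega>))^2" by simp
      have "(\<integral>\<^sup>+\<omega>. ennreal ((norm (\<Theta> 0 \<omega>))^2) \<partial>M)
        \<le> (\<integral>\<^sup>+ \<omega>. ennreal ((norm (\<Theta> 0 \<omega>))^2) + (SUP n\<in>{1..}. ennreal (norm (X n 1 \<omega>))) \<partial>M)"
        by (intro nn_integral_mono) simp
      then show "(\<integral>\<^sup>+\<omega>. ennreal ((norm (\<Theta> 0 \<omega>))^2) \<partial>M) < \<infinity>" using moment by simp
    qed
    show ?thesis
    proof (rule Bochner_Integration.integrable_bound[where f="\<lambda>\<omega>. 2 * (norm (\<Theta> 0 \<omega>))^2 + 2 * (norm \<mu>)^2"])
      show "integrable M (\<lambda>\<omega>. 2 * (norm (\<Theta> 0 \<omega>))^2 + 2 * (norm \<mu>)^2)" using T0 by simp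
      show "(\<lambda>\<omega>. (norm (\<Theta> 0 \<omega> - \<mu>))^2) \<in> borel_measurable M" by measurable
      show "AE \<omega> in M. norm ((norm (\<Theta> 0 \<omega> - \<mu>))^2) \<le> norm (2 * (norm (\<Theta> 0 \<omega>))^2 + 2 * (norm \<mu>)^2)"
      proof (intro AE_I2)
        fix \<omega>
        have "norm (\<Theta> 0 \<omega> - \<mu>) \<le> norm (\<Theta> 0 \<omega>) + norm \<mu>" by (rule norm_triangle_ineq4)
        then have "(norm (\<Theta> 0 \<omega> - \<mu>))^2 \<le> (norm (\<Theta> 0 \<omega>) + norm \<mu>)^2" by (intro power_mono) auto
        also have "\<dots> \<le> 2 * (norm (\<Theta> 0 \<omega>))^2 + 2 * (norm \<mu>)^2" by (rule sq_sum_le)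
        finally show "norm ((norm (\<Theta> 0 \<omega> - \<mu>))^2) \<le> norm (2 * (norm (\<Theta> 0 \<omega>))^2 + 2 * (norm \<mu>)^2)" by simp
      qed
    qed
  qed
  interpret S: sgd_setup M \<kappa> F \<gamma> Mb X \<Theta> \<mu> D
    by unfold_locales (fact kappa_pos sub Fmono gmeas Mb_pos Xmeas Xint Xmean Xind Theta_adapted rec good Dnn V0)+
  have SS: "S.S n \<omega> = (\<Sum>k<n. \<gamma> (Suc k) \<omega>)" for n \<omega>
    unfolding S.S_def by (simp add: sum.atLeast1_atMost_eq)
  have Ndef: "N t \<omega> = (LEAST n. t \<le> S.S n \<omega>)" if "t \<ge> 0" for t \<omega>
    using N_def[OF that] unfolding S.S_def Inf_nat_def by simp
  have [measurable]: "S.S n \<in> borel_measurable M" for n using S.measM[OF S.S_F[of n n]] by simp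
  have [measurable]: "S.A n \<in> borel_measurable M" "S.V n \<in> borel_measurable M"
    "\<gamma> (Suc n) \<in> borel_measurable M" for n using S.A_M S.V_M S.g_M by auto
  have [measurable]: "S.Hs t k \<in> borel_measurable M" for t k by (rule S.Hs_M)
  have Nmeas: "N t \<in> measurable M (count_space UNIV)" if "t \<ge> 0" for t
  proof -
    have "N t = (\<lambda>\<omega>. LEAST n. t \<le> S.S n \<omega>)" using Ndef[OF that] by auto
    moreover have "(\<lambda>\<omega>. LEAST n. t \<le> S.S n \<omega>) \<in> measurable M (count_space UNIV)" by measurable
    ultimately show ?thesis by simp
  qed
  define R where "R t \<omega> = (\<Sum>k<N t \<omega>. (\<gamma> (Suc k) \<omega>)^2 * S.A (Suc k) \<omega>)" for t \<omega>
  have Rmeas: "R t \<in> borel_measurable M" if "t \<ge> 0" for t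
    unfolding R_def by (rule measurable_compose_countable'[where I=UNIV, OF _ Nmeas[OF that]]) auto
  have Rnn: "0 \<le> R t \<omega>" for t \<omega>
    unfolding R_def using S.A_pos by (intro sum_nonneg mult_nonneg_nonneg) (auto intro: less_imp_le)
  define Gd where "Gd \<omega> \<longleftrightarrow> S.goodw \<omega> \<and> (\<lambda>n. \<gamma> (Suc n) \<omega>) \<longlonglongrightarrow> 0 \<and> (\<forall>t. \<exists>n. t \<le> S.S n \<omega>)" for \<omega>
  have AGd: "AE \<omega> in M. Gd \<omega>"
    using S.AE_good G1 G2 by eventually_elim (auto simp: Gd_def S.S_def)
  have gnn: "0 \<le> \<gamma> (Suc k) \<omega>" "\<kappa> * \<gamma> (Suc k) \<omega> \<le> 1" if "Gd \<omega>" for k \<omega>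
    using that unfolding Gd_def S.goodw_def by auto
  have Nprop: "t \<le> S.S (N t \<omega>) \<omega> \<and> (\<forall>j < N t \<omega>. S.S j \<omega> < t)" if t: "t \<ge> 0" and G: "Gd \<omega>" for t \<omega>
  proof -
    obtain n1 where "t \<le> S.S n1 \<omega>" using G unfolding Gd_def by blast
    then have "t \<le> S.S (LEAST n. t \<le> S.S n \<omega>) \<omega>" by (rule LeastI)
    moreover have "\<forall>j < (LEAST n. t \<le> S.S n \<omega>). S.S j \<omega> < t"
      using not_less_Least[where P="\<lambda>n. t \<le> S.S n \<omega>"] by (auto simp: not_le)
    ultimately show ?thesis unfolding Ndef[OF t] by blast
  qed
  have Hs_eq: "S.Hs t k \<omega> = (if k \<le> N t \<omega> then 1 else 0)" if t: "t \<ge> 0" and G: "Gd \<omega>" for t k \<omega>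
  proof (cases "k \<le> N t \<omega>")
    case True
    then show ?thesis using Nprop[OF t G] unfolding S.Hs_def by auto
  next
    case False
    then have "\<not> (\<forall>j<k. S.S j \<omega> < t)" using Nprop[OF t G] by (auto simp: not_le intro!: exI[of _ "N t \<omega>"])
    then show ?thesis using False unfolding S.Hs_def by auto
  qed
  have sum1: "(\<Sum>k. ennreal ((S.Hs t k \<omega> - S.Hs t (Suc k) \<omega>) * S.A k \<omega> * S.V k \<omega>))
      = ennreal (S.A (N t \<omega>) \<omega> * S.V (N t \<omega>) \<omega>)" if t: "t \<ge> 0" and G: "Gd \<omega>" for t \<omega>
  proof -
    have "(\<lambda>k. ennreal ((S.Hs t k \<omega> - S.Hs t (Suc k) \<omega>) * S.A k \<omega> * S.V k \<omega>))
      = (\<lambda>k. if k = N t \<omega> then ennreal (S.A (N t \<omega>) \<omega> * S.V (N t \<omega>) \<omega>) else 0)"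
      by (auto simp: Hs_eq[OF t G] fun_eq_iff)
    then show ?thesis using sums_unique[OF sums_single[of "N t \<omega>" "\<lambda>_. ennreal (S.A (N t \<omega>) \<omega> * S.V (N t \<omega>) \<omega>)"]]
      by simp
  qed
  have sum2: "(\<Sum>k. ennreal (S.Hs t (Suc k) \<omega> * (\<gamma> (Suc k) \<omega>)^2 * S.A (Suc k) \<omega>)) = ennreal (R t \<omega>)"
    if t: "t \<ge> 0" and G: "Gd \<omega>" for t \<omega>
  proof -
    have "(\<Sum>k. ennreal (S.Hs t (Suc k) \<omega> * (\<gamma> (Suc k) \<omega>)^2 * S.A (Suc k) \<omega>))
        = (\<Sum>k<N t \<omega>. ennreal (S.Hs t (Suc k) \<omega> * (\<gamma> (Suc k) \<omega>)^2 * S.A (Suc k) \<omega>))"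
      by (rule suminf_finite) (auto simp: Hs_eq[OF t G])
    also have "\<dots> = (\<Sum>k<N t \<omega>. ennreal ((\<gamma> (Suc k) \<omega>)^2 * S.A (Suc k) \<omega>))"
      by (intro sum.cong refl) (auto simp: Hs_eq[OF t G])
    also have "\<dots> = ennreal (R t \<omega>)" unfolding R_def
      by (intro sum_ennreal mult_nonneg_nonneg zero_le_power2 less_imp_le[OF S.A_pos])
    finally show ?thesis .
  qed
  have Abig: "exp (\<kappa> * t) \<le> S.A (N t \<omega>) \<omega>" if t: "t \<ge> 0" and G: "Gd \<omega>" for t \<omega>
    unfolding S.A_def using Nprop[OF t G] kappa_pos by (simp add: mult_left_mono)
  have Ssmall: "\<kappa> * S.S (N t \<omega>) \<omega> \<le> \<kappa> * t + 1" if t: "t \<ge> 0" and G: "Gd \<omega>" for t \<omega>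
  proof (cases "N t \<omega>")
    case 0 then show ?thesis using t kappa_pos by (simp add: S.S_0)
  next
    case (Suc p)
    then have "S.S p \<omega> < t" using Nprop[OF t G] by auto
    then have "\<kappa> * S.S p \<omega> \<le> \<kappa> * t" using kappa_pos by simp
    then show ?thesis unfolding Suc S.S_Suc using gnn(2)[OF G, of p] by (simp add: distrib_left)
  qed
  define c where "c = \<kappa>^2 * D^2"
  have FI: "(\<integral>\<^sup>+\<omega>. ennreal (S.V (N t \<omega>) \<omega>) \<partial>M) \<le> ennreal (exp (- \<kappa> * t)) *
      ((\<integral>\<^sup>+\<omega>. ennreal (S.V 0 \<omega>) \<partial>M) + ennreal c * (\<integral>\<^sup>+\<omega>. ennreal (R t \<omega>) \<partial>M))" if t: "t \<ge> 0" for t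
  proof -
    have m1: "(\<lambda>\<omega>. \<Sum>k. ennreal ((S.Hs t k \<omega> - S.Hs t (Suc k) \<omega>) * S.A k \<omega> * S.V k \<omega>)) \<in> borel_measurable M"
      by measurable
    have eq2: "(\<integral>\<^sup>+\<omega>. (\<Sum>k. ennreal (S.Hs t (Suc k) \<omega> * (\<gamma> (Suc k) \<omega>)^2 * S.A (Suc k) \<omega>)) \<partial>M)
        = (\<integral>\<^sup>+\<omega>. ennreal (R t \<omega>) \<partial>M)"
      using AGd by (intro nn_integral_cong_AE) (auto elim!: eventually_mono simp: sum2[OF t])
    have "(\<integral>\<^sup>+\<omega>. ennreal (S.V (N t \<omega>) \<omega>) \<partial>M)
        \<le> (\<integral>\<^sup>+\<omega>. ennreal (exp (- \<kappa> * t)) * (\<Sum>k. ennreal ((S.Hs t k \<omega> - S.Hs t (Suc k) \<omega>) * S.A k \<omega> * S.V k \<omega>)) \<partial>M)"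
    proof (rule nn_integral_mono_AE)
      show "AE \<omega> in M. ennreal (S.V (N t \<omega>) \<omega>) \<le> ennreal (exp (- \<kappa> * t)) * (\<Sum>k. ennreal ((S.Hs t k \<omega> - S.Hs t (Suc k) \<omega>) * S.A k \<omega> * S.V k \<omega>))"
        using AGd
      proof eventually_elim
        case (elim \<omega>)
        have Vn: "0 \<le> S.V (N t \<omega>) \<omega>" unfolding S.V_def by simp
        have one: "1 \<le> exp (- \<kappa> * t) * S.A (N t \<omega>) \<omega>"
        proof -
          have "1 = exp (- \<kappa> * t) * exp (\<kappa> * t)" by (simp add: exp_minus field_simps)
          also have "\<dots> \<le> exp (- \<kappa> * t) * S.A (N t \<omega>) \<omega>" using Abig[OF t elim] by (intro mult_left_mono) auto
          finally show ?thesis .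
        qed
        have "S.V (N t \<omega>) \<omega> \<le> exp (- \<kappa> * t) * (S.A (N t \<omega>) \<omega> * S.V (N t \<omega>) \<omega>)"
          using mult_right_mono[OF one Vn] by (simp add: mult.assoc)
        then show ?case unfolding sum1[OF t elim]
          using S.A_pos[of "N t \<omega>" \<omega>] Vn by (simp add: ennreal_mult[symmetric] ennreal_leI del: ennreal_mult)
      qed
    qed
    also have "\<dots> = ennreal (exp (- \<kappa> * t)) * (\<integral>\<^sup>+\<omega>. (\<Sum>k. ennreal ((S.Hs t k \<omega> - S.Hs t (Suc k) \<omega>) * S.A k \<omega> * S.V k \<omega>)) \<partial>M)"
      by (rule nn_integral_cmult[OF m1])
    also have "\<dots> \<le> ennreal (exp (- \<kappa> * t)) * ((\<integral>\<^sup>+\<omega>. ennreal (S.V 0 \<omega>) \<partial>M) + ennreal c *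
        (\<integral>\<^sup>+\<omega>. (\<Sum>k. ennreal (S.Hs t (Suc k) \<omega> * (\<gamma> (Suc k) \<omega>)^2 * S.A (Suc k) \<omega>)) \<partial>M))"
      unfolding c_def by (intro mult_left_mono S.tele) auto
    finally show ?thesis unfolding eq2 .
  qed
  define s where "s t \<omega> = exp (- \<kappa> * max t 0) * R (max t 0) \<omega>" for t \<omega>
  define w where "w = exp 2 / \<kappa>^2"
  have smeas: "s t \<in> borel_measurable M" for t
  proof -
    have [measurable]: "R (max t 0) \<in> borel_measurable M" using Rmeas by simp
    show ?thesis unfolding s_def by measurable
  qed
  have Rb: "exp (- \<kappa> * t) * R t \<omega> \<le> w" if t: "t \<ge> 0" and G: "Gd \<omega>" for t \<omega>
  proof -
    have Aeq: "S.A (Suc k) \<omega> = exp (\<kappa> * (\<Sum>j<Suc k. \<gamma> (Suc j) \<omega>))" for k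
      unfolding S.A_def SS ..
    have "R t \<omega> \<le> exp 1 / \<kappa>^2 * exp (\<kappa> * (\<Sum>j<N t \<omega>. \<gamma> (Suc j) \<omega>))"
      unfolding R_def Aeq by (rule R_bound[OF kappa_pos gnn[OF G]])
    also have "\<dots> \<le> exp 1 / \<kappa>^2 * exp (\<kappa> * t + 1)"
      using Ssmall[OF t G] unfolding SS by (intro mult_left_mono) auto
    finally have "exp (- \<kappa> * t) * R t \<omega> \<le> exp (- \<kappa> * t) * (exp 1 / \<kappa>^2 * exp (\<kappa> * t + 1))"
      by (intro mult_left_mono) auto
    also have "\<dots> = w" unfolding w_def
      by (simp add: exp_add exp_minus field_simps) (simp add: mult_exp_exp)
    finally show ?thesis .
  qed
  have sb: "AE \<omega> in M. norm (s t \<omega>) \<le> w" for t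
    using AGd
  proof eventually_elim
    case (elim \<omega>)
    have "0 \<le> s t \<omega>" unfolding s_def using Rnn by simp
    then show ?case using Rb[of "max t 0" \<omega>] elim unfolding s_def by simp
  qed
  have wnn: "0 \<le> w" unfolding w_def by simp
  have sint: "integrable M (s t)" for t
    by (rule Bochner_Integration.integrable_bound[where f="\<lambda>_. w"]) (use smeas sb wnn in \<open>auto simp: abs_of_nonneg\<close>)
  have slim: "AE \<omega> in M. ((\<lambda>t. s t \<omega>) \<longlongrightarrow> 0) at_top"
    using AGd
  proof eventually_elim
    case (elim \<omega>)
    have glim: "(\<lambda>k. \<gamma> (Suc k) \<omega>) \<longlonglongrightarrow> 0" using elim unfolding Gd_def by simp
    have Nt: "\<kappa> * (\<Sum>j<N t \<omega>. \<gamma> (Suc j) \<omega>) \<le> \<kappa> * t + 1" if "t \<ge> 0" for t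
      using Ssmall[OF that elim] unfolding SS .
    have L: "((\<lambda>t. exp (- \<kappa> * t) * (\<Sum>k<N t \<omega>. (\<gamma> (Suc k) \<omega>)^2 * exp (\<kappa> * (\<Sum>j<Suc k. \<gamma> (Suc j) \<omega>)))) \<longlongrightarrow> 0) at_top"
      by (rule R_lim[OF kappa_pos gnn[OF elim] glim Nt])
    show ?case
    proof (rule Lim_transform_eventually[OF L])
      show "\<forall>\<^sub>F t in at_top. exp (- \<kappa> * t) * (\<Sum>k<N t \<omega>. (\<gamma> (Suc k) \<omega>)^2 * exp (\<kappa> * (\<Sum>j<Suc k. \<gamma> (Suc j) \<omega>))) = s t \<omega>"
        using eventually_ge_at_top[of "0::real"]
        by eventually_elim (simp add: s_def R_def S.A_def SS)
    qed
  qed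
  have DCT: "((\<lambda>t. integral\<^sup>L M (s t)) \<longlongrightarrow> integral\<^sup>L M (\<lambda>\<omega>. 0::real)) at_top"
    by (rule integral_dominated_convergence_at_top[where w="\<lambda>_. w"])
       (use smeas slim sb in auto)
  have I0: "(\<integral>\<^sup>+\<omega>. ennreal (S.V 0 \<omega>) \<partial>M) = ennreal (integral\<^sup>L M (S.V 0))"
    by (rule nn_integral_eq_integral[OF S.intV0]) (simp add: S.V_def)
  have I0nn: "0 \<le> integral\<^sup>L M (S.V 0)" by (simp add: S.V_def)
  have Is: "ennreal (exp (- \<kappa> * t)) * (\<integral>\<^sup>+\<omega>. ennreal (R t \<omega>) \<partial>M) = ennreal (integral\<^sup>L M (s t))" if t: "t \<ge> 0" for t
  proof -
    have "ennreal (exp (- \<kappa> * t)) * (\<integral>\<^sup>+\<omega>. ennreal (R t \<omega>) \<partial>M) = (\<integral>\<^sup>+\<omega>. ennreal (exp (- \<kappa> * t)) * ennreal (R t \<omega>) \<partial>M)"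
      by (rule nn_integral_cmult[symmetric]) (use Rmeas[OF t] in measurable)
    also have "\<dots> = (\<integral>\<^sup>+\<omega>. ennreal (s t \<omega>) \<partial>M)"
      using t Rnn by (intro nn_integral_cong) (simp add: s_def ennreal_mult)
    also have "\<dots> = ennreal (integral\<^sup>L M (s t))"
      by (rule nn_integral_eq_integral[OF sint]) (simp add: s_def Rnn)
    finally show ?thesis .
  qed
  have Isnn: "0 \<le> integral\<^sup>L M (s t)" for t by (rule Bochner_Integration.integral_nonneg) (simp add: s_def Rnn)
  define h where "h t = exp (- \<kappa> * t) * integral\<^sup>L M (S.V 0) + c * integral\<^sup>L M (s t)" for t
  have expl: "((\<lambda>t. exp (- \<kappa> * t)) \<longlongrightarrow> 0) at_top"
  proof -
    have "filterlim (\<lambda>t. \<kappa> * t) at_top at_top"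
      by (rule filterlim_tendsto_pos_mult_at_top[OF tendsto_const kappa_pos filterlim_ident])
    then have "filterlim (\<lambda>t. - \<kappa> * t) at_bot at_top"
      by (simp add: filterlim_uminus_at_bot)
    from filterlim_compose[OF exp_at_bot this] show ?thesis .
  qed
  have hlim: "(h \<longlongrightarrow> 0) at_top"
  proof -
    have "(h \<longlongrightarrow> 0 * integral\<^sup>L M (S.V 0) + c * integral\<^sup>L M (\<lambda>\<omega>. 0::real)) at_top"
      unfolding h_def by (intro tendsto_intros expl DCT)
    then show ?thesis by simp
  qed
  have ev: "\<forall>\<^sub>F t in at_top. (\<integral>\<^sup>+\<omega>. ennreal ((norm (\<Theta> (N t \<omega>) \<omega> - integral\<^sup>L M (X 1 1)))^2) \<partial>M) \<le> ennreal (h t)"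
    using eventually_ge_at_top[of "0::real"]
  proof eventually_elim
    case (elim t)
    have "(\<integral>\<^sup>+\<omega>. ennreal ((norm (\<Theta> (N t \<omega>) \<omega> - integral\<^sup>L M (X 1 1)))^2) \<partial>M)
        = (\<integral>\<^sup>+\<omega>. ennreal (S.V (N t \<omega>) \<omega>) \<partial>M)" unfolding \<mu>_def[symmetric] by (simp add: S.V_def S.e_def)
    also have "\<dots> \<le> ennreal (exp (- \<kappa> * t)) * ((\<integral>\<^sup>+\<omega>. ennreal (S.V 0 \<omega>) \<partial>M) + ennreal c * (\<integral>\<^sup>+\<omega>. ennreal (R t \<omega>) \<partial>M))"
      by (rule FI[OF elim])
    also have "\<dots> = ennreal (exp (- \<kappa> * t)) * ennreal (integral\<^sup>L M (S.V 0)) + ennreal c * (ennreal (exp (- \<kappa> * t)) * (\<integral>\<^sup>+\<omega>. ennreal (R t \<omega>) \<partial>M))"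
      unfolding I0 by (simp add: distrib_left ac_simps)
    also have "\<dots> = ennreal (h t)"
      unfolding Is[OF elim] h_def c_def using I0nn Isnn
      by (simp add: ennreal_mult[symmetric] ennreal_plus[symmetric] del: ennreal_plus)
    finally show ?case .
  qed
  have "Limsup at_top (\<lambda>t. \<integral>\<^sup>+ \<omega>. ennreal ((norm (\<Theta> (N t \<omega>) \<omega> - integral\<^sup>L M (X 1 1)))^2) \<partial>M)
      \<le> Limsup at_top (\<lambda>t. ennreal (h t))"
    by (rule Limsup_mono[OF ev])
  also have "\<dots> = 0"
  proof -
    have "((\<lambda>t. ennreal (h t)) \<longlongrightarrow> ennreal 0) at_top" by (rule tendsto_ennrealI[OF hlim])
    then have "Limsup at_top (\<lambda>t. ennreal (h t)) = ennreal 0"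
      by (intro lim_imp_Limsup) auto
    then show ?thesis by simp
  qed
  finally show ?thesis by simp
qed


end
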